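(* Let $H_1\in\mathbb{F}_2^{r_1\times n_1}$ and $H_2\in\mathbb{F}_2^{r_2\times n_2}$ be arbitrary binary matrices (rows may be linearly dependent), and let $\mathcal{Q}$ be the hypergraph product code of $H_1$ and $H_2$ on $n=n_1n_2+r_1r_2$ qubits, with $X$-check matrix $H_X=\big(H_1\otimes I_{n_2}\ \big|\ I_{r_1}\otimes H_2^T\big)$ and $Z$-check matrix $H_Z=\big(I_{n_1}\otimes H_2\ \big|\ H_1^T\otimes I_{r_2}\big)$. Let $d$ be the distance of $\mathcal{Q}$. Suppose every row of $H_Z$ and of $H_X$ is measured with its own ancilla qubit by a sequence of two-qubit gates applied in an arbitrary order to the qubits in its support. Then, for every choice of these orders, the effective distance of $\mathcal{Q}$ is also $d$.
   Context: Vectors in $\mathbb{F}_2^{n}$ are indexed so that the first $n_1n_2$ coordinates correspond to "bit-type" qubits (indexed by pairs of a column of $H_1$ and a column of $H_2$) and the last $r_1r_2$ to "check-type" qubits (indexed by pairs of a row of $H_1$ and a row of $H_2$). Each row of $H_X$ (resp. $H_Z$) defines an $X$-type (resp. $Z$-type) stabilizer generator acting as $X$ (resp. $Z$) on the qubits where the row is $1$; these commute since $H_XH_Z^T=0$. The distance $d$ is the minimum Hamming weight of a vector in $\big(\ker H_X\setminus \mathrm{Im}\,H_Z^T\big)\cup\big(\ker H_Z\setminus \mathrm{Im}\,H_X^T\big)$ (i.e. of a nontrivial logical $Z$ or $X$ operator), with $d=\infty$ if this set is empty. Fault model: a fault is either (i) a single-qubit Pauli error on a data qubit, or (ii) an error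 on the ancilla during the measurement of one stabilizer generator, which propagates to the data qubits: an ancilla error during the measurement of a $Z$-type (resp. $X$-type) generator with support $S$ produces a $Z$ (resp. $X$) error on a subset of $S$ (the possible subsets depend on the gate order; the analysis allows any subset of $S$). A $Y$ error on an ancilla propagates as either an $X$- or a $Z$-type error, so it is covered by (ii). The resulting data-qubit error is the product of the errors produced by all faults. The effective distance (for the given code and measurement circuits) is the minimum number of faults whose resulting data-qubit error is an undetectable logical error, i.e. its $X$-part lies in $\ker H_Z\setminus\mathrm{Im}\,H_X^T$ or its $Z$-part lies in $\ker H_X\setminus\mathrm{Im}\,H_Z^T$, while it commutes with all stabilizers. *)

theory Defs
  imports Main "HOL-Library.Extended_Nat"
begin

text \<open>Binary matrices H :: nat => nat => bool, H i j = True iff entry (i,j) is 1,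
  with explicit dimensions. Binary vectors over F_2 are represented by their supports
  (sets of qubits); addition is symmetric difference, Hamming weight is card.\<close>

type_synonym qubit = "(nat \<times> nat) + (nat \<times> nat)"

definition symd :: "'a set \<Rightarrow> 'a set \<Rightarrow> 'a set" where
  "symd A B = (A - B) \<union> (B - A)"

inductive_set f2_span :: "'a set set \<Rightarrow> 'a set set" for G where
  span_zero: "{} \<in> f2_span G"
| span_add: "s \<in> G \<Longrightarrow> v \<in> f2_span G \<Longrightarrow> symd s v \<in> f2_span G"

text \<open>Qubits: bit-type Inl (i,j), i<n1 column of H1, j<n2 column of H2;
  check-type Inr (a,b), a<r1 row of H1, b<r2 row of H2.\<close>
definition hgp_qubits :: "nat \<Rightarrow> nat \<Rightarrow> nat \<Rightarrow> nat \<Rightarrow> qubit set" where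
  "hgp_qubits r1 n1 r2 n2 = Inl ` ({..<n1} \<times> {..<n2}) \<union> Inr ` ({..<r1} \<times> {..<r2})"

text \<open>Rows of H_X = (H1 (x) I_n2 | I_r1 (x) H2^T), indexed by (a,j), a<r1, j<n2.\<close>
definition hgp_X_rows :: "nat \<Rightarrow> nat \<Rightarrow> (nat \<times> nat) set" where
  "hgp_X_rows r1 n2 = {..<r1} \<times> {..<n2}"

definition hgp_X_row :: "(nat \<Rightarrow> nat \<Rightarrow> bool) \<Rightarrow> (nat \<Rightarrow> nat \<Rightarrow> bool)
    \<Rightarrow> nat \<Rightarrow> nat \<Rightarrow> nat \<times> nat \<Rightarrow> qubit set" where
  "hgp_X_row H1 H2 n1 r2 = (\<lambda>(a, j).
     {Inl (i, j) | i. i < n1 \<and> H1 a i} \<union> {Inr (a, b) | b. b < r2 \<and> H2 b j})"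

text \<open>Rows of H_Z = (I_n1 (x) H2 | H1^T (x) I_r2), indexed by (i,b), i<n1, b<r2.\<close>
definition hgp_Z_rows :: "nat \<Rightarrow> nat \<Rightarrow> (nat \<times> nat) set" where
  "hgp_Z_rows n1 r2 = {..<n1} \<times> {..<r2}"

definition hgp_Z_row :: "(nat \<Rightarrow> nat \<Rightarrow> bool) \<Rightarrow> (nat \<Rightarrow> nat \<Rightarrow> bool)
    \<Rightarrow> nat \<Rightarrow> nat \<Rightarrow> nat \<times> nat \<Rightarrow> qubit set" where
  "hgp_Z_row H1 H2 r1 n2 = (\<lambda>(i, b).
     {Inl (i, j) | j. j < n2 \<and> H2 b j} \<union> {Inr (a, b) | a. a < r1 \<and> H1 a i})"

definition f2_kernel :: "'q set \<Rightarrow> 'i set \<Rightarrow> ('i \<Rightarrow> 'q set) \<Rightarrow> 'q set set" where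
  "f2_kernel Q I row = {v. v \<subseteq> Q \<and> (\<forall>r\<in>I. even (card (v \<inter> row r)))}"

definition ker_HX where
  "ker_HX H1 H2 r1 n1 r2 n2 =
     f2_kernel (hgp_qubits r1 n1 r2 n2) (hgp_X_rows r1 n2) (hgp_X_row H1 H2 n1 r2)"
definition ker_HZ where
  "ker_HZ H1 H2 r1 n1 r2 n2 =
     f2_kernel (hgp_qubits r1 n1 r2 n2) (hgp_Z_rows n1 r2) (hgp_Z_row H1 H2 r1 n2)"
definition im_HXT where
  "im_HXT H1 H2 r1 n1 r2 n2 = f2_span (hgp_X_row H1 H2 n1 r2 ` hgp_X_rows r1 n2)"
definition im_HZT where
  "im_HZT H1 H2 r1 n1 r2 n2 = f2_span (hgp_Z_row H1 H2 r1 n2 ` hgp_Z_rows n1 r2)"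

definition hgp_logicals where
  "hgp_logicals H1 H2 r1 n1 r2 n2 =
     (ker_HX H1 H2 r1 n1 r2 n2 - im_HZT H1 H2 r1 n1 r2 n2)
   \<union> (ker_HZ H1 H2 r1 n1 r2 n2 - im_HXT H1 H2 r1 n1 r2 n2)"

text \<open>Distance (infinity if there are no nontrivial logicals).\<close>
definition hgp_distance :: "(nat \<Rightarrow> nat \<Rightarrow> bool) \<Rightarrow> (nat \<Rightarrow> nat \<Rightarrow> bool)
    \<Rightarrow> nat \<Rightarrow> nat \<Rightarrow> nat \<Rightarrow> nat \<Rightarrow> enat" where
  "hgp_distance H1 H2 r1 n1 r2 n2 =
     (INF v \<in> hgp_logicals H1 H2 r1 n1 r2 n2. enat (card v))"

text \<open>Measurement circuits: for every generator a gate order, i.e. a list enumerating its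
  support without repetition.\<close>
definition valid_orders where
  "valid_orders H1 H2 r1 n1 r2 n2 ordX ordZ \<longleftrightarrow>
     (\<forall>r\<in>hgp_X_rows r1 n2. distinct (ordX r) \<and> set (ordX r) = hgp_X_row H1 H2 n1 r2 r)
   \<and> (\<forall>r\<in>hgp_Z_rows n1 r2. distinct (ordZ r) \<and> set (ordZ r) = hgp_Z_row H1 H2 r1 n2 r)"

text \<open>Effect (X-part, Z-part) of a single fault: a single-qubit Pauli X, Z or Y on a data
  qubit, or an ancilla error during the measurement of a generator, which propagates to
  the qubits whose gates come after the fault in the gate order (a suffix of the order).\<close>
definition single_faults where
  "single_faults H1 H2 r1 n1 r2 n2 ordX ordZ =
     {({q}, {}) | q. q \<in> hgp_qubits r1 n1 r2 n2}
   \<union> {({}, {q}) | q. q \<in> hgp_qubits r1 n1 r2 n2}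
   \<union> {({q}, {q}) | q. q \<in> hgp_qubits r1 n1 r2 n2}
   \<union> {(set (drop k (ordX r)), {}) | r k. r \<in> hgp_X_rows r1 n2}
   \<union> {({}, set (drop k (ordZ r))) | r k. r \<in> hgp_Z_rows n1 r2}"

definition pauli_mult :: "'q set \<times> 'q set \<Rightarrow> 'q set \<times> 'q set \<Rightarrow> 'q set \<times> 'q set" where
  "pauli_mult e f = (symd (fst e) (fst f), symd (snd e) (snd f))"

definition fault_error :: "('q set \<times> 'q set) list \<Rightarrow> 'q set \<times> 'q set" where
  "fault_error fs = foldr pauli_mult fs ({}, {})"

definition undetectable_logical where
  "undetectable_logical H1 H2 r1 n1 r2 n2 e \<longleftrightarrow>
     fst e \<in> ker_HZ H1 H2 r1 n1 r2 n2 \<and> snd e \<in> ker_HX H1 H2 r1 n1 r2 n2 \<and>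
     (fst e \<notin> im_HXT H1 H2 r1 n1 r2 n2 \<or> snd e \<notin> im_HZT H1 H2 r1 n1 r2 n2)"

definition effective_distance where
  "effective_distance H1 H2 r1 n1 r2 n2 ordX ordZ =
     (INF fs \<in> {fs. set fs \<subseteq> single_faults H1 H2 r1 n1 r2 n2 ordX ordZ
                  \<and> undetectable_logical H1 H2 r1 n1 r2 n2 (fault_error fs)}.
        enat (length fs))"

end

theory Submission
  imports Defs
begin

lemma symd_iff[simp]: "x \<in> symd A B \<longleftrightarrow> (x \<in> A) \<noteq> (x \<in> B)"
  by (auto simp: symd_def)

lemma symd_empty[simp]: "symd {} A = A" "symd A {} = A"
  by (auto simp: symd_def)

lemma finite_symd[simp]: "finite A \<Longrightarrow> finite B \<Longrightarrow> finite (symd A B)"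
  by (auto simp: symd_def)

lemma card_symd_odd:
  assumes "finite A" "finite B"
  shows "odd (card (symd A B)) \<longleftrightarrow> (odd (card A) \<noteq> odd (card B))"
proof -
  have 1: "symd A B = (A - B) \<union> (B - A)" by (auto simp: symd_def)
  have 2: "card (symd A B) = card (A - B) + card (B - A)"
    unfolding 1 by (rule card_Un_disjoint) (use assms in auto)
  have 3: "card A = card (A - B) + card (A \<inter> B)"
  proof -
    have "A = (A - B) \<union> (A \<inter> B)" by auto
    then have "card A = card ((A - B) \<union> (A \<inter> B))" by simp
    also have "\<dots> = card (A - B) + card (A \<inter> B)" by (rule card_Un_disjoint) (use assms in auto)
    finally show ?thesis .
  qed
  have 4: "card B = card (B - A) + card (A \<inter> B)"
  proof -
    have "B = (B - A) \<union> (A \<inter> B)" by auto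
    then have "card B = card ((B - A) \<union> (A \<inter> B))" by simp
    also have "\<dots> = card (B - A) + card (A \<inter> B)" by (rule card_Un_disjoint) (use assms in auto)
    finally show ?thesis .
  qed
  show ?thesis using 2 3 4 by auto
qed

lemma par_symd:
  assumes "finite C"
  shows "odd (card (symd A B \<inter> C)) \<longleftrightarrow> (odd (card (A \<inter> C)) \<noteq> odd (card (B \<inter> C)))"
proof -
  have "symd A B \<inter> C = symd (A \<inter> C) (B \<inter> C)" by (auto simp: symd_def)
  then show ?thesis using card_symd_odd[of "A \<inter> C" "B \<inter> C"] assms by simp
qed

lemma even_sum_iff:
  fixes g :: "'a \<Rightarrow> nat"
  assumes "finite A"
  shows "even (sum g A) \<longleftrightarrow> even (card {a\<in>A. odd (g a)})"
  using assms
proof (induction A rule: finite_induct)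
  case empty then show ?case by simp
next
  case (insert x F)
  have e: "{a \<in> insert x F. odd (g a)} = (if odd (g x) then insert x {a\<in>F. odd (g a)} else {a\<in>F. odd (g a)})"
    by auto
  show ?case
  proof (cases "odd (g x)")
    case True
    have "x \<notin> {a\<in>F. odd (g a)}" using insert by auto
    then show ?thesis using insert True unfolding e by simp
  next
    case False
    then show ?thesis using insert unfolding e by simp
  qed
qed

lemma swap_parity:
  assumes "finite A" "finite B"
  shows "odd (card {a\<in>A. odd (card {b\<in>B. R a b})}) \<longleftrightarrow> odd (card {b\<in>B. odd (card {a\<in>A. R a b})})"
proof -
  have c1: "\<And>a. card {b\<in>B. R a b} = (\<Sum>b\<in>B. if R a b then 1 else 0)"
    using assms(2) by (subst sum.inter_filter[symmetric]) auto
  have c2: "\<And>b. card {a\<in>A. R a b} = (\<Sum>a\<in>A. if R a b then 1 else 0)"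
    using assms(1) by (subst sum.inter_filter[symmetric]) auto
  have "(\<Sum>a\<in>A. card {b\<in>B. R a b}) = (\<Sum>b\<in>B. card {a\<in>A. R a b})"
    unfolding c1 c2 by (rule sum.swap)
  then show ?thesis using even_sum_iff[OF assms(1), of "\<lambda>a. card {b\<in>B. R a b}"]
      even_sum_iff[OF assms(2), of "\<lambda>b. card {a\<in>A. R a b}"] by simp
qed

definition xsum :: "('i \<Rightarrow> 'a set) \<Rightarrow> 'i set \<Rightarrow> 'a set" where
  "xsum f T = {x. odd (card {t\<in>T. x \<in> f t})}"

lemma xsum_iff: "x \<in> xsum f T \<longleftrightarrow> odd (card {t\<in>T. x \<in> f t})"
  by (simp add: xsum_def)

lemma xsum_empty[simp]: "xsum f {} = {}"
  by (simp add: xsum_def)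

lemma xsum_insert:
  assumes "finite T" "t \<notin> T"
  shows "xsum f (insert t T) = symd (f t) (xsum f T)"
proof -
  have "\<And>x. {s \<in> insert t T. x \<in> f s} = (if x \<in> f t then insert t {s\<in>T. x \<in> f s} else {s\<in>T. x \<in> f s})"
    by auto
  then show ?thesis using assms by (auto simp: xsum_def)
qed

lemma xsum_single[simp]: "xsum f {t} = f t"
  using xsum_insert[of "{}" t f] by simp

lemma xsum_symd_idx:
  assumes "finite S" "finite T"
  shows "xsum f (symd S T) = symd (xsum f S) (xsum f T)"
proof -
  have "\<And>x. {s \<in> symd S T. x \<in> f s} = symd {s\<in>S. x \<in> f s} {s\<in>T. x \<in> f s}"
    by auto
  then show ?thesis using assms card_symd_odd[of "{s\<in>S. _ \<in> f s}" "{s\<in>T. _ \<in> f s}"]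
    by (auto simp: xsum_def)
qed

lemma xsum_subset:
  assumes "\<forall>t\<in>T. f t \<subseteq> U"
  shows "xsum f T \<subseteq> U"
proof
  fix x assume x: "x \<in> xsum f T"
  show "x \<in> U"
  proof (rule ccontr)
    assume "x \<notin> U"
    then have "{t\<in>T. x \<in> f t} = {}" using assms by auto
    then show False using x by (simp only: xsum_iff) simp
  qed
qed

lemma par_xsum:
  assumes "finite T" "finite C"
  shows "odd (card (xsum f T \<inter> C)) \<longleftrightarrow> odd (card {t\<in>T. odd (card (f t \<inter> C))})"
proof -
  have 1: "xsum f T \<inter> C = {x\<in>C. odd (card {t\<in>T. x \<in> f t})}" by (auto simp: xsum_def)
  have 2: "\<And>t. f t \<inter> C = {x\<in>C. x \<in> f t}" by auto
  show ?thesis unfolding 1 2 by (rule swap_parity[OF assms(2,1)])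
qed

lemma xsum_comp:
  assumes "finite G" "finite J" "\<forall>a\<in>G. B a \<subseteq> J"
  shows "xsum h (xsum B G) = xsum (\<lambda>a. xsum h (B a)) G"
proof (rule set_eqI)
  fix x
  have s: "xsum B G \<subseteq> J" using assms(3) by (intro xsum_subset) auto
  have "x \<in> xsum h (xsum B G) \<longleftrightarrow> odd (card {j\<in>J. odd (card {a\<in>G. j \<in> B a}) \<and> x \<in> h j})"
  proof -
    have "{t \<in> xsum B G. x \<in> h t} = {j\<in>J. odd (card {a\<in>G. j \<in> B a}) \<and> x \<in> h j}"
      using s by (auto simp: xsum_def)
    then show ?thesis by (simp add: xsum_iff)
  qed
  also have "\<dots> \<longleftrightarrow> odd (card {j\<in>J. odd (card {a\<in>G. j \<in> B a \<and> x \<in> h j})})"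
  proof -
    have "\<And>j. (odd (card {a\<in>G. j \<in> B a}) \<and> x \<in> h j) = odd (card {a\<in>G. j \<in> B a \<and> x \<in> h j})"
      by (case_tac "x \<in> h j") auto
    then have "{j\<in>J. odd (card {a\<in>G. j \<in> B a}) \<and> x \<in> h j} = {j\<in>J. odd (card {a\<in>G. j \<in> B a \<and> x \<in> h j})}"
      by auto
    then show ?thesis by simp
  qed
  also have "\<dots> \<longleftrightarrow> odd (card {a\<in>G. odd (card {j\<in>J. j \<in> B a \<and> x \<in> h j})})"
    using swap_parity[OF assms(2,1), of "\<lambda>j a. j \<in> B a \<and> x \<in> h j"] by simp
  also have "\<dots> \<longleftrightarrow> x \<in> xsum (\<lambda>a. xsum h (B a)) G"
  proof -
    have "\<And>a. a \<in> G \<Longrightarrow> {j\<in>J. j \<in> B a \<and> x \<in> h j} = {t \<in> B a. x \<in> h t}"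
      using assms(3) by auto
    then have "{a\<in>G. odd (card {j\<in>J. j \<in> B a \<and> x \<in> h j})} = {a\<in>G. x \<in> xsum h (B a)}"
      by (auto simp: xsum_iff)
    then show ?thesis by (simp add: xsum_iff)
  qed
  finally show "x \<in> xsum h (xsum B G) \<longleftrightarrow> x \<in> xsum (\<lambda>a. xsum h (B a)) G" .
qed

lemma symd_assoc: "symd (symd A B) C = symd A (symd B C)"
  by auto
lemma symd_comm: "symd A B = symd B A"
  by auto
lemma symd_self[simp]: "symd A A = {}"
  by auto

lemma duality:
  assumes "finite I" "finite U" "\<forall>i\<in>I. f i \<subseteq> U" "v \<subseteq> U"
    "\<forall>z. z \<subseteq> U \<longrightarrow> (\<forall>i\<in>I. even (card (z \<inter> f i))) \<longrightarrow> even (card (z \<inter> v))"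
  shows "\<exists>T\<subseteq>I. v = xsum f T"
  using assms
proof (induction I arbitrary: v rule: finite_induct)
  case empty
  show ?case
  proof (cases "v = {}")
    case True then show ?thesis by auto
  next
    case False
    then obtain q where q: "q \<in> v" by auto
    have "{q} \<inter> v = {q}" using q by auto
    then show ?thesis using empty(4)[rule_format, of "{q}"] q empty(3) by auto
  qed
next
  case (insert i I)
  have fU: "\<forall>j\<in>I. f j \<subseteq> U" using insert by auto
  have fin: "\<And>z. z \<subseteq> U \<Longrightarrow> finite z" using insert(4) finite_subset by blast
  show ?case
  proof (cases "\<forall>z. z \<subseteq> U \<longrightarrow> (\<forall>j\<in>I. even (card (z \<inter> f j))) \<longrightarrow> even (card (z \<inter> v))")
    case True
    from insert.IH[OF insert(4) fU insert(6) True] show ?thesis by auto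
  next
    case False
    then obtain z1 where z1: "z1 \<subseteq> U" "\<forall>j\<in>I. even (card (z1 \<inter> f j))" "odd (card (z1 \<inter> v))"
      by auto
    have z1i: "odd (card (z1 \<inter> f i))"
      using insert(7) z1 by auto
    let ?v = "symd v (f i)"
    show ?thesis
    proof (cases "\<forall>z. z \<subseteq> U \<longrightarrow> (\<forall>j\<in>I. even (card (z \<inter> f j))) \<longrightarrow> even (card (z \<inter> ?v))")
      case True
      have "?v \<subseteq> U" using insert(5,6) by (auto simp: symd_def)
      from insert.IH[OF insert(4) fU this True] obtain T where T: "T \<subseteq> I" "?v = xsum f T" by auto
      have "finite T" using T insert(1) finite_subset by blast
      then have "xsum f (insert i T) = symd (f i) ?v" using T insert(2) xsum_insert by fastforce
      also have "\<dots> = v" by auto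
      finally show ?thesis using T by blast
    next
      case False
      then obtain z2 where z2: "z2 \<subseteq> U" "\<forall>j\<in>I. even (card (z2 \<inter> f j))" "odd (card (z2 \<inter> ?v))"
        by auto
      have pz: "\<And>z A B. z \<subseteq> U \<Longrightarrow> odd (card (z \<inter> symd A B)) \<longleftrightarrow> (odd (card (z \<inter> A)) \<noteq> odd (card (z \<inter> B)))"
        using par_symd fin by (metis Int_commute)
      have z2i: "odd (card (z2 \<inter> f i))"
      proof (rule ccontr)
        assume "\<not> ?thesis"
        then have "even (card (z2 \<inter> v))" using insert(7) z2 by auto
        then show False using z2(3) pz[OF z2(1), of v "f i"] \<open>\<not> odd (card (z2 \<inter> f i))\<close> by simp
      qed
      let ?z = "symd z1 z2"
      have zU: "?z \<subseteq> U" using z1 z2 by (auto simp: symd_def)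
      have pj: "\<And>j. j \<in> insert i I \<Longrightarrow> odd (card (?z \<inter> f j)) \<longleftrightarrow> (odd (card (z1 \<inter> f j)) \<noteq> odd (card (z2 \<inter> f j)))"
        using par_symd fin insert(5) by blast
      have "\<forall>j\<in>insert i I. even (card (?z \<inter> f j))"
      proof
        fix j assume j: "j \<in> insert i I"
        show "even (card (?z \<inter> f j))"
        proof (cases "j = i")
          case True then show ?thesis using pj[OF j] z1i z2i by simp
        next
          case False then have "j \<in> I" using j by auto
          then show ?thesis using pj[OF j] z1(2) z2(2) by simp
        qed
      qed
      then have "even (card (?z \<inter> v))" using insert(7) zU by auto
      moreover have "odd (card (?z \<inter> v))"
      proof -
        have a: "even (card (z2 \<inter> v))" using pz[OF z2(1), of v "f i"] z2(3) z2i by simp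
        have "finite v" using insert(6) fin by blast
        then have "odd (card (?z \<inter> v)) \<longleftrightarrow> (odd (card (z1 \<inter> v)) \<noteq> odd (card (z2 \<inter> v)))"
          using par_symd by blast
        then show ?thesis using a z1(3) by simp
      qed
      ultimately show ?thesis by simp
    qed
  qed
qed

lemma span_symd:
  assumes "a \<in> f2_span G" "b \<in> f2_span G"
  shows "symd a b \<in> f2_span G"
  using assms
proof (induction a rule: f2_span.induct)
  case span_zero then show ?case by simp
next
  case (span_add s v)
  have "symd (symd s v) b = symd s (symd v b)" by auto
  then show ?case using span_add f2_span.span_add by simp
qed

lemma xsum_in_span:
  assumes "finite T" "\<forall>t\<in>T. f t \<in> G"
  shows "xsum f T \<in> f2_span G"
  using assms
proof (induction T rule: finite_induct)
  case empty then show ?case by (simp add: f2_span.span_zero)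
next
  case (insert x F)
  then show ?case by (simp add: xsum_insert f2_span.span_add)
qed

lemma span_even:
  assumes "s \<in> f2_span G" "finite z" "\<forall>g\<in>G. even (card (g \<inter> z))"
  shows "even (card (s \<inter> z))"
  using assms
proof (induction s rule: f2_span.induct)
  case span_zero then show ?case by simp
next
  case (span_add s v)
  then show ?case using par_symd[OF assms(2), of s v] by auto
qed

lemma exists_basis:
  assumes "finite K"
  shows "\<exists>J\<subseteq>K. (\<forall>k\<in>K. \<exists>T\<subseteq>J. h k = xsum h T) \<and> (\<forall>T\<subseteq>J. xsum h T = {} \<longrightarrow> T = {})"
proof -
  let ?P = "\<lambda>J. J \<subseteq> K \<and> (\<forall>k\<in>K. \<exists>T\<subseteq>J. h k = xsum h T)"
  have "?P K"
  proof -
    have "\<forall>k\<in>K. \<exists>T\<subseteq>K. h k = xsum h T"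
    proof
      fix k assume "k \<in> K" then show "\<exists>T\<subseteq>K. h k = xsum h T" by (intro exI[of _ "{k}"]) simp
    qed
    then show ?thesis by simp
  qed
  from ex_has_least_nat[of ?P K card] obtain J where J: "?P J" "\<forall>J'. ?P J' \<longrightarrow> card J \<le> card J'"
    using \<open>?P K\<close> by blast
  have finJ: "finite J" using J(1) assms finite_subset by blast
  have indep: "\<forall>T\<subseteq>J. xsum h T = {} \<longrightarrow> T = {}"
  proof (intro allI impI, rule ccontr)
    fix T assume T: "T \<subseteq> J" "xsum h T = {}" "T \<noteq> {}"
    then obtain t where t: "t \<in> T" by auto
    have finT: "finite T" using T(1) finJ finite_subset by blast
    have "?P (J - {t})"
    proof -
      have "\<forall>k\<in>K. \<exists>S\<subseteq>J - {t}. h k = xsum h S"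
      proof
        fix k assume k: "k \<in> K"
        then obtain S where S: "S \<subseteq> J" "h k = xsum h S" using J(1) by blast
        have finS: "finite S" using S(1) finJ finite_subset by blast
        show "\<exists>S\<subseteq>J - {t}. h k = xsum h S"
        proof (cases "t \<in> S")
          case False then show ?thesis using S by blast
        next
          case True
          have "xsum h (symd S T) = symd (xsum h S) (xsum h T)" by (rule xsum_symd_idx[OF finS finT])
          also have "\<dots> = h k" using S T by simp
          finally have "h k = xsum h (symd S T)" by simp
          moreover have "symd S T \<subseteq> J - {t}" using S T True t by (auto simp: symd_def)
          ultimately show ?thesis by blast
        qed
      qed
      then show ?thesis using J(1) by auto
    qed
    then have "card J \<le> card (J - {t})" using J(2) by blast
    moreover have "card (J - {t}) < card J" using finJ t T(1) by (meson card_Diff1_less subsetD)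
    ultimately show False by simp
  qed
  show ?thesis using J(1) indep by blast
qed

lemma card_symd_le: "finite A \<Longrightarrow> finite B \<Longrightarrow> card (symd A B) \<le> card A + card B"
  unfolding symd_def by (meson Diff_subset card_Un_le card_mono order_trans add_mono)

lemma count_gen:
  assumes lin: "\<And>A B. \<pi> (symd A B) = symd (\<pi> A) (\<pi> B)" and z: "\<pi> {} = {}"
    and fin: "\<And>A. finite (\<pi> A)" and one: "\<forall>P\<in>set Ps. card (\<pi> P) \<le> 1"
  shows "card (\<pi> (foldr symd Ps {})) \<le> length Ps"
  using one
proof (induction Ps)
  case Nil then show ?case by (simp add: z)
next
  case (Cons P Ps)
  have "card (\<pi> (foldr symd (P # Ps) {})) = card (symd (\<pi> P) (\<pi> (foldr symd Ps {})))"
    by (simp add: lin)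
  also have "\<dots> \<le> card (\<pi> P) + card (\<pi> (foldr symd Ps {}))" by (rule card_symd_le[OF fin fin])
  also have "\<dots> \<le> 1 + length Ps" using Cons by (intro add_mono) auto
  finally show ?case by simp
qed

definition rowH1 :: "(nat \<Rightarrow> nat \<Rightarrow> bool) \<Rightarrow> nat \<Rightarrow> nat \<Rightarrow> nat set" where
  "rowH1 H1 n1 a = {i. i < n1 \<and> H1 a i}"
definition colH2 :: "(nat \<Rightarrow> nat \<Rightarrow> bool) \<Rightarrow> nat \<Rightarrow> nat \<Rightarrow> nat set" where
  "colH2 H2 r2 j = {b. b < r2 \<and> H2 b j}"

lemma mem_Xrow_Inl[simp]: "Inl (i,j) \<in> hgp_X_row H1 H2 n1 r2 (a,j') \<longleftrightarrow> j' = j \<and> i < n1 \<and> H1 a i"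
  by (auto simp: hgp_X_row_def)
lemma mem_Xrow_Inr[simp]: "Inr (a',b) \<in> hgp_X_row H1 H2 n1 r2 (a,j) \<longleftrightarrow> a' = a \<and> b < r2 \<and> H2 b j"
  by (auto simp: hgp_X_row_def)
lemma mem_Zrow_Inl[simp]: "Inl (i',j) \<in> hgp_Z_row H1 H2 r1 n2 (i,b) \<longleftrightarrow> i' = i \<and> j < n2 \<and> H2 b j"
  by (auto simp: hgp_Z_row_def)
lemma mem_Zrow_Inr[simp]: "Inr (a,b') \<in> hgp_Z_row H1 H2 r1 n2 (i,b) \<longleftrightarrow> b' = b \<and> a < r1 \<and> H1 a i"
  by (auto simp: hgp_Z_row_def)
lemma mem_Q_Inl[simp]: "Inl (i,j) \<in> hgp_qubits r1 n1 r2 n2 \<longleftrightarrow> i < n1 \<and> j < n2"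
  by (auto simp: hgp_qubits_def)
lemma mem_Q_Inr[simp]: "Inr (a,b) \<in> hgp_qubits r1 n1 r2 n2 \<longleftrightarrow> a < r1 \<and> b < r2"
  by (auto simp: hgp_qubits_def)
lemma finite_Q[simp]: "finite (hgp_qubits r1 n1 r2 n2)"
  by (simp add: hgp_qubits_def)

lemma Xrow_sub_Q: "r \<in> hgp_X_rows r1 n2 \<Longrightarrow> hgp_X_row H1 H2 n1 r2 r \<subseteq> hgp_qubits r1 n1 r2 n2"
  by (auto simp: hgp_X_rows_def hgp_X_row_def)
lemma Zrow_sub_Q: "r \<in> hgp_Z_rows n1 r2 \<Longrightarrow> hgp_Z_row H1 H2 r1 n2 r \<subseteq> hgp_qubits r1 n1 r2 n2"
  by (auto simp: hgp_Z_rows_def hgp_Z_row_def)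

lemma card_Zrow_Int:
  "card (S \<inter> hgp_Z_row H1 H2 r1 n2 (i,b)) =
     card {j. j < n2 \<and> H2 b j \<and> Inl (i,j) \<in> S} + card {a. a < r1 \<and> H1 a i \<and> Inr (a,b) \<in> S}"
proof -
  have e: "S \<inter> hgp_Z_row H1 H2 r1 n2 (i,b) =
     (\<lambda>j. Inl (i,j) :: qubit) ` {j. j < n2 \<and> H2 b j \<and> Inl (i,j) \<in> S} \<union> (\<lambda>a. Inr (a,b) :: qubit) ` {a. a < r1 \<and> H1 a i \<and> Inr (a,b) \<in> S}"
    by (auto simp: hgp_Z_row_def)
  have "card (S \<inter> hgp_Z_row H1 H2 r1 n2 (i,b)) =
     card ((\<lambda>j. Inl (i,j) :: qubit) ` {j. j < n2 \<and> H2 b j \<and> Inl (i,j) \<in> S}) + card ((\<lambda>a. Inr (a,b) :: qubit) ` {a. a < r1 \<and> H1 a i \<and> Inr (a,b) \<in> S})"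
    unfolding e by (subst card_Un_disjoint) (auto simp: finite_image_iff inj_on_def)
  also have "\<dots> = card {j. j < n2 \<and> H2 b j \<and> Inl (i,j) \<in> S} + card {a. a < r1 \<and> H1 a i \<and> Inr (a,b) \<in> S}"
    by (subst card_image, simp add: inj_on_def)+ simp
  finally show ?thesis .
qed

lemma card_Xrow_Int:
  "card (S \<inter> hgp_X_row H1 H2 n1 r2 (a,j)) =
     card {i. i < n1 \<and> H1 a i \<and> Inl (i,j) \<in> S} + card {b. b < r2 \<and> H2 b j \<and> Inr (a,b) \<in> S}"
proof -
  have e: "S \<inter> hgp_X_row H1 H2 n1 r2 (a,j) =
     (\<lambda>i. Inl (i,j) :: qubit) ` {i. i < n1 \<and> H1 a i \<and> Inl (i,j) \<in> S} \<union> (\<lambda>b. Inr (a,b) :: qubit) ` {b. b < r2 \<and> H2 b j \<and> Inr (a,b) \<in> S}"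
    by (auto simp: hgp_X_row_def)
  have "card (S \<inter> hgp_X_row H1 H2 n1 r2 (a,j)) =
     card ((\<lambda>i. Inl (i,j) :: qubit) ` {i. i < n1 \<and> H1 a i \<and> Inl (i,j) \<in> S}) + card ((\<lambda>b. Inr (a,b) :: qubit) ` {b. b < r2 \<and> H2 b j \<and> Inr (a,b) \<in> S})"
    unfolding e by (subst card_Un_disjoint) (auto simp: finite_image_iff inj_on_def)
  also have "\<dots> = card {i. i < n1 \<and> H1 a i \<and> Inl (i,j) \<in> S} + card {b. b < r2 \<and> H2 b j \<and> Inr (a,b) \<in> S}"
    by (subst card_image, simp add: inj_on_def)+ simp
  finally show ?thesis .
qed

lemma kerZ_par:
  assumes "e \<in> ker_HZ H1 H2 r1 n1 r2 n2" "i < n1" "b < r2"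
  shows "odd (card {j. j < n2 \<and> H2 b j \<and> Inl (i,j) \<in> e}) \<longleftrightarrow> odd (card {a. a < r1 \<and> H1 a i \<and> Inr (a,b) \<in> e})"
proof -
  have "(i,b) \<in> hgp_Z_rows n1 r2" using assms by (simp add: hgp_Z_rows_def)
  then have "even (card (e \<inter> hgp_Z_row H1 H2 r1 n2 (i,b)))"
    using assms(1) by (auto simp: ker_HZ_def f2_kernel_def)
  then show ?thesis unfolding card_Zrow_Int by simp
qed

lemma kerX_par:
  assumes "e \<in> ker_HX H1 H2 r1 n1 r2 n2" "a < r1" "j < n2"
  shows "odd (card {i. i < n1 \<and> H1 a i \<and> Inl (i,j) \<in> e}) \<longleftrightarrow> odd (card {b. b < r2 \<and> H2 b j \<and> Inr (a,b) \<in> e})"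
proof -
  have "(a,j) \<in> hgp_X_rows r1 n2" using assms by (simp add: hgp_X_rows_def)
  then have "even (card (e \<inter> hgp_X_row H1 H2 n1 r2 (a,j)))"
    using assms(1) by (auto simp: ker_HX_def f2_kernel_def)
  then show ?thesis unfolding card_Xrow_Int by simp
qed

lemma projA:
  assumes e: "e \<in> ker_HZ H1 H2 r1 n1 r2 n2"
    and u: "u \<subseteq> {..<n1}" "\<forall>a<r1. even (card (u \<inter> rowH1 H1 n1 a))"
    and j0: "j0 < n2" "odd (card {i\<in>u. Inl (i,j0) \<in> e})"
  shows "\<exists>L\<in>hgp_logicals H1 H2 r1 n1 r2 n2. card L = card {j. j < n2 \<and> odd (card {i\<in>u. Inl (i,j) \<in> e})}"
proof -
  have finu: "finite u" using u(1) finite_subset by blast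
  obtain i0 where i0: "i0 \<in> u" using j0(2) by (metis (no_types, lifting) card.empty empty_Collect_eq odd_card_imp_not_empty)
  define y where "y = {j. j < n2 \<and> odd (card {i\<in>u. Inl (i,j) \<in> e})}"
  define L :: "qubit set" where "L = (\<lambda>j. Inl (i0,j)) ` y"
  have cardL: "card L = card y" unfolding L_def by (rule card_image) (simp add: inj_on_def)
  have i0n: "i0 < n1" using i0 u(1) by auto
  have LQ: "L \<subseteq> hgp_qubits r1 n1 r2 n2" using i0n by (auto simp: L_def y_def)
  have Lker: "L \<in> ker_HZ H1 H2 r1 n1 r2 n2"
    unfolding ker_HZ_def f2_kernel_def
  proof (intro CollectI conjI ballI LQ)
    fix r assume r: "r \<in> hgp_Z_rows n1 r2"
    obtain i b where ib: "r = (i,b)" by force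
    have b: "b < r2" using r ib by (simp add: hgp_Z_rows_def)
    have z2: "{a. a < r1 \<and> H1 a i \<and> Inr (a,b) \<in> L} = {}" by (auto simp: L_def)
    show "even (card (L \<inter> hgp_Z_row H1 H2 r1 n2 r))"
    proof (cases "i = i0")
      case False
      then have z1: "{j. j < n2 \<and> H2 b j \<and> Inl (i,j) \<in> L} = {}" by (auto simp: L_def)
      show ?thesis unfolding ib card_Zrow_Int z1 z2 by simp
    next
      case True
      have s1: "{j. j < n2 \<and> H2 b j \<and> Inl (i,j) \<in> L} = {j\<in>{..<n2}. odd (card {i\<in>u. H2 b j \<and> Inl (i,j) \<in> e})}"
      proof -
        have "\<And>j. odd (card {i\<in>u. H2 b j \<and> Inl (i,j) \<in> e}) \<longleftrightarrow> H2 b j \<and> odd (card {i\<in>u. Inl (i,j) \<in> e})"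
          by (case_tac "H2 b j") auto
        then show ?thesis using True by (auto simp: L_def y_def)
      qed
      have "odd (card {j\<in>{..<n2}. odd (card {i\<in>u. H2 b j \<and> Inl (i,j) \<in> e})}) \<longleftrightarrow>
            odd (card {i\<in>u. odd (card {j\<in>{..<n2}. H2 b j \<and> Inl (i,j) \<in> e})})"
        by (rule swap_parity) (use finu in auto)
      also have "{i\<in>u. odd (card {j\<in>{..<n2}. H2 b j \<and> Inl (i,j) \<in> e})} =
                 {i\<in>u. odd (card {a\<in>{..<r1}. H1 a i \<and> Inr (a,b) \<in> e})}"
      proof -
        have "\<And>i. i \<in> u \<Longrightarrow> odd (card {j\<in>{..<n2}. H2 b j \<and> Inl (i,j) \<in> e}) \<longleftrightarrow> odd (card {a\<in>{..<r1}. H1 a i \<and> Inr (a,b) \<in> e})"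
        proof -
          fix i assume "i \<in> u"
          then have "i < n1" using u(1) by auto
          from kerZ_par[OF e this b] show "?thesis i" by (simp add: conj_commute)
        qed
        then show ?thesis by auto
      qed
      also have "odd (card {i\<in>u. odd (card {a\<in>{..<r1}. H1 a i \<and> Inr (a,b) \<in> e})}) \<longleftrightarrow>
                 odd (card {a\<in>{..<r1}. odd (card {i\<in>u. H1 a i \<and> Inr (a,b) \<in> e})})"
        by (rule swap_parity) (use finu in auto)
      also have "{a\<in>{..<r1}. odd (card {i\<in>u. H1 a i \<and> Inr (a,b) \<in> e})} = {}"
      proof -
        have "\<And>a. a < r1 \<Longrightarrow> even (card {i\<in>u. H1 a i \<and> Inr (a,b) \<in> e})"
        proof -
          fix a assume a: "a < r1"
          show "even (card {i\<in>u. H1 a i \<and> Inr (a,b) \<in> e})"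
          proof (cases "Inr (a,b) \<in> e")
            case True
            have "{i\<in>u. H1 a i \<and> Inr (a,b) \<in> e} = u \<inter> rowH1 H1 n1 a"
              using True u(1) by (auto simp: rowH1_def)
            then show ?thesis using u(2) a by simp
          qed simp
        qed
        then show ?thesis by auto
      qed
      finally show ?thesis unfolding ib card_Zrow_Int z2 s1 by simp
    qed
  qed
  have Lnot: "L \<notin> im_HXT H1 H2 r1 n1 r2 n2"
  proof
    assume Lim: "L \<in> im_HXT H1 H2 r1 n1 r2 n2"
    define z :: "qubit set" where "z = (\<lambda>i. Inl (i,j0)) ` u"
    have finz: "finite z" using finu by (simp add: z_def)
    have "\<forall>g\<in>hgp_X_row H1 H2 n1 r2 ` hgp_X_rows r1 n2. even (card (g \<inter> z))"
    proof
      fix g assume "g \<in> hgp_X_row H1 H2 n1 r2 ` hgp_X_rows r1 n2"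
      then obtain a j where aj: "a < r1" "j < n2" "g = hgp_X_row H1 H2 n1 r2 (a,j)"
        by (auto simp: hgp_X_rows_def)
      have z2: "{b. b < r2 \<and> H2 b j \<and> Inr (a,b) \<in> z} = {}" by (auto simp: z_def)
      show "even (card (g \<inter> z))"
      proof (cases "j = j0")
        case True
        have "{i. i < n1 \<and> H1 a i \<and> Inl (i,j) \<in> z} = u \<inter> rowH1 H1 n1 a"
          using True u(1) by (auto simp: z_def rowH1_def)
        then show ?thesis using u(2) aj unfolding aj(3) Int_commute[of _ z] card_Xrow_Int z2 by simp
      next
        case False
        then have z1: "{i. i < n1 \<and> H1 a i \<and> Inl (i,j) \<in> z} = {}" by (auto simp: z_def)
        show ?thesis unfolding aj(3) Int_commute[of _ z] card_Xrow_Int z1 z2 by simp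
      qed
    qed
    then have "even (card (L \<inter> z))" using span_even[OF Lim[unfolded im_HXT_def] finz] by blast
    moreover have "L \<inter> z = {Inl (i0,j0)}"
      using i0 j0 by (auto simp: L_def z_def y_def)
    ultimately show False by simp
  qed
  have "L \<in> hgp_logicals H1 H2 r1 n1 r2 n2" using Lker Lnot by (simp add: hgp_logicals_def)
  then show ?thesis using cardL y_def by blast
qed

lemma projB:
  assumes e: "e \<in> ker_HZ H1 H2 r1 n1 r2 n2"
    and w: "w \<subseteq> {..<r2}" "\<forall>j<n2. even (card (w \<inter> colH2 H2 r2 j))"
    and a0: "a0 < r1" "odd (card {b\<in>w. Inr (a0,b) \<in> e})"
  shows "\<exists>L\<in>hgp_logicals H1 H2 r1 n1 r2 n2. card L = card {a. a < r1 \<and> odd (card {b\<in>w. Inr (a,b) \<in> e})}"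
proof -
  have finw: "finite w" using w(1) finite_subset by blast
  obtain b0 where b0: "b0 \<in> w" using a0(2) by (metis (no_types, lifting) card.empty empty_Collect_eq odd_card_imp_not_empty)
  define x where "x = {a. a < r1 \<and> odd (card {b\<in>w. Inr (a,b) \<in> e})}"
  define L :: "qubit set" where "L = (\<lambda>a. Inr (a,b0)) ` x"
  have cardL: "card L = card x" unfolding L_def by (rule card_image) (simp add: inj_on_def)
  have b0n: "b0 < r2" using b0 w(1) by auto
  have LQ: "L \<subseteq> hgp_qubits r1 n1 r2 n2" using b0n by (auto simp: L_def x_def)
  have Lker: "L \<in> ker_HZ H1 H2 r1 n1 r2 n2"
    unfolding ker_HZ_def f2_kernel_def
  proof (intro CollectI conjI ballI LQ)
    fix r assume r: "r \<in> hgp_Z_rows n1 r2"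
    obtain i b where ib: "r = (i,b)" by force
    have i: "i < n1" using r ib by (simp add: hgp_Z_rows_def)
    have z1: "{j. j < n2 \<and> H2 b j \<and> Inl (i,j) \<in> L} = {}" by (auto simp: L_def)
    show "even (card (L \<inter> hgp_Z_row H1 H2 r1 n2 r))"
    proof (cases "b = b0")
      case False
      then have z2: "{a. a < r1 \<and> H1 a i \<and> Inr (a,b) \<in> L} = {}" by (auto simp: L_def)
      show ?thesis unfolding ib card_Zrow_Int z1 z2 by simp
    next
      case True
      have s1: "{a. a < r1 \<and> H1 a i \<and> Inr (a,b) \<in> L} = {a\<in>{..<r1}. odd (card {bb\<in>w. H1 a i \<and> Inr (a,bb) \<in> e})}"
      proof -
        have "\<And>a. odd (card {bb\<in>w. H1 a i \<and> Inr (a,bb) \<in> e}) \<longleftrightarrow> H1 a i \<and> odd (card {bb\<in>w. Inr (a,bb) \<in> e})"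
          by (case_tac "H1 a i") auto
        then show ?thesis using True by (auto simp: L_def x_def)
      qed
      have "odd (card {a\<in>{..<r1}. odd (card {bb\<in>w. H1 a i \<and> Inr (a,bb) \<in> e})}) \<longleftrightarrow>
            odd (card {bb\<in>w. odd (card {a\<in>{..<r1}. H1 a i \<and> Inr (a,bb) \<in> e})})"
        by (rule swap_parity) (use finw in auto)
      also have "{bb\<in>w. odd (card {a\<in>{..<r1}. H1 a i \<and> Inr (a,bb) \<in> e})} =
                 {bb\<in>w. odd (card {j\<in>{..<n2}. H2 bb j \<and> Inl (i,j) \<in> e})}"
      proof -
        have "\<And>bb. bb \<in> w \<Longrightarrow> odd (card {a\<in>{..<r1}. H1 a i \<and> Inr (a,bb) \<in> e}) \<longleftrightarrow> odd (card {j\<in>{..<n2}. H2 bb j \<and> Inl (i,j) \<in> e})"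
        proof -
          fix bb assume "bb \<in> w"
          then have "bb < r2" using w(1) by auto
          from kerZ_par[OF e i this] show "?thesis bb" by (simp add: conj_commute)
        qed
        then show ?thesis by auto
      qed
      also have "odd (card {bb\<in>w. odd (card {j\<in>{..<n2}. H2 bb j \<and> Inl (i,j) \<in> e})}) \<longleftrightarrow>
                 odd (card {j\<in>{..<n2}. odd (card {bb\<in>w. H2 bb j \<and> Inl (i,j) \<in> e})})"
        by (rule swap_parity) (use finw in auto)
      also have "{j\<in>{..<n2}. odd (card {bb\<in>w. H2 bb j \<and> Inl (i,j) \<in> e})} = {}"
      proof -
        have "\<And>j. j < n2 \<Longrightarrow> even (card {bb\<in>w. H2 bb j \<and> Inl (i,j) \<in> e})"
        proof -
          fix j assume j: "j < n2"
          show "even (card {bb\<in>w. H2 bb j \<and> Inl (i,j) \<in> e})"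
          proof (cases "Inl (i,j) \<in> e")
            case True
            have "{bb\<in>w. H2 bb j \<and> Inl (i,j) \<in> e} = w \<inter> colH2 H2 r2 j"
              using True w(1) by (auto simp: colH2_def)
            then show ?thesis using w(2) j by simp
          qed simp
        qed
        then show ?thesis by auto
      qed
      finally show ?thesis unfolding ib card_Zrow_Int z1 s1 by simp
    qed
  qed
  have Lnot: "L \<notin> im_HXT H1 H2 r1 n1 r2 n2"
  proof
    assume Lim: "L \<in> im_HXT H1 H2 r1 n1 r2 n2"
    define z :: "qubit set" where "z = (\<lambda>b. Inr (a0,b)) ` w"
    have finz: "finite z" using finw by (simp add: z_def)
    have "\<forall>g\<in>hgp_X_row H1 H2 n1 r2 ` hgp_X_rows r1 n2. even (card (g \<inter> z))"
    proof
      fix g assume "g \<in> hgp_X_row H1 H2 n1 r2 ` hgp_X_rows r1 n2"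
      then obtain a j where aj: "a < r1" "j < n2" "g = hgp_X_row H1 H2 n1 r2 (a,j)"
        by (auto simp: hgp_X_rows_def)
      have z1: "{i. i < n1 \<and> H1 a i \<and> Inl (i,j) \<in> z} = {}" by (auto simp: z_def)
      show "even (card (g \<inter> z))"
      proof (cases "a = a0")
        case True
        have "{b. b < r2 \<and> H2 b j \<and> Inr (a,b) \<in> z} = w \<inter> colH2 H2 r2 j"
          using True w(1) by (auto simp: z_def colH2_def)
        then show ?thesis using w(2) aj unfolding aj(3) Int_commute[of _ z] card_Xrow_Int z1 by simp
      next
        case False
        then have z2: "{b. b < r2 \<and> H2 b j \<and> Inr (a,b) \<in> z} = {}" by (auto simp: z_def)
        show ?thesis unfolding aj(3) Int_commute[of _ z] card_Xrow_Int z1 z2 by simp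
      qed
    qed
    then have "even (card (L \<inter> z))" using span_even[OF Lim[unfolded im_HXT_def] finz] by blast
    moreover have "L \<inter> z = {Inr (a0,b0)}"
      using b0 a0 by (auto simp: L_def z_def x_def)
    ultimately show False by simp
  qed
  have "L \<in> hgp_logicals H1 H2 r1 n1 r2 n2" using Lker Lnot by (simp add: hgp_logicals_def)
  then show ?thesis using cardL x_def by blast
qed

lemma span_sub:
  assumes "s \<in> f2_span G" "\<forall>g\<in>G. g \<subseteq> U"
  shows "s \<subseteq> U"
  using assms by (induction s rule: f2_span.induct) (auto simp: symd_def)

lemma kerZ_symd:
  assumes "a \<in> ker_HZ H1 H2 r1 n1 r2 n2" "b \<in> ker_HZ H1 H2 r1 n1 r2 n2"
  shows "symd a b \<in> ker_HZ H1 H2 r1 n1 r2 n2"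
proof -
  have fin: "\<And>r. r \<in> hgp_Z_rows n1 r2 \<Longrightarrow> finite (hgp_Z_row H1 H2 r1 n2 r)"
    by (rule finite_subset[OF Zrow_sub_Q finite_Q])
  have aQ: "a \<subseteq> hgp_qubits r1 n1 r2 n2" "b \<subseteq> hgp_qubits r1 n1 r2 n2"
    using assms by (auto simp: ker_HZ_def f2_kernel_def)
  show ?thesis unfolding ker_HZ_def f2_kernel_def
  proof (intro CollectI conjI ballI)
    show "symd a b \<subseteq> hgp_qubits r1 n1 r2 n2" using aQ by (auto simp: symd_def)
    fix r assume r: "r \<in> hgp_Z_rows n1 r2"
    have "even (card (a \<inter> hgp_Z_row H1 H2 r1 n2 r))" "even (card (b \<inter> hgp_Z_row H1 H2 r1 n2 r))"
      using assms r by (auto simp: ker_HZ_def f2_kernel_def)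
    then show "even (card (symd a b \<inter> hgp_Z_row H1 H2 r1 n2 r))"
      using par_symd[OF fin[OF r], of a b] by simp
  qed
qed

lemma im_sub_kerZ:
  assumes "s \<in> im_HXT H1 H2 r1 n1 r2 n2"
  shows "s \<in> ker_HZ H1 H2 r1 n1 r2 n2"
proof -
  have sQ: "s \<subseteq> hgp_qubits r1 n1 r2 n2"
    by (rule span_sub[OF assms[unfolded im_HXT_def]]) (use Xrow_sub_Q in fastforce)
  have "\<forall>r\<in>hgp_Z_rows n1 r2. even (card (s \<inter> hgp_Z_row H1 H2 r1 n2 r))"
  proof
    fix r assume r: "r \<in> hgp_Z_rows n1 r2"
    obtain i b where ib: "r = (i,b)" "i < n1" "b < r2" using r by (auto simp: hgp_Z_rows_def)
    have fin: "finite (hgp_Z_row H1 H2 r1 n2 r)"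
      by (rule finite_subset[OF Zrow_sub_Q[OF r] finite_Q])
    have "\<forall>g\<in>hgp_X_row H1 H2 n1 r2 ` hgp_X_rows r1 n2. even (card (g \<inter> hgp_Z_row H1 H2 r1 n2 r))"
    proof
      fix g assume "g \<in> hgp_X_row H1 H2 n1 r2 ` hgp_X_rows r1 n2"
      then obtain a j where aj: "a < r1" "j < n2" "g = hgp_X_row H1 H2 n1 r2 (a,j)"
        by (auto simp: hgp_X_rows_def)
      have c1: "{j'. j' < n2 \<and> H2 b j' \<and> Inl (i,j') \<in> g} = (if H2 b j \<and> H1 a i then {j} else {})"
        using aj ib by auto
      have c2: "{a'. a' < r1 \<and> H1 a' i \<and> Inr (a',b) \<in> g} = (if H2 b j \<and> H1 a i then {a} else {})"
        using aj ib by auto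
      show "even (card (g \<inter> hgp_Z_row H1 H2 r1 n2 r))"
        unfolding ib(1) card_Zrow_Int c1 c2 by simp
    qed
    then show "even (card (s \<inter> hgp_Z_row H1 H2 r1 n2 r))"
      using span_even[OF assms[unfolded im_HXT_def] fin] by blast
  qed
  then show ?thesis using sQ by (simp add: ker_HZ_def f2_kernel_def)
qed

lemma kunneth:
  assumes e: "e \<in> ker_HZ H1 H2 r1 n1 r2 n2"
    and hu: "\<forall>u. u \<subseteq> {..<n1} \<longrightarrow> (\<forall>a<r1. even (card (u \<inter> rowH1 H1 n1 a))) \<longrightarrow> (\<forall>j<n2. even (card {i\<in>u. Inl (i,j) \<in> e}))"
    and hw: "\<forall>w. w \<subseteq> {..<r2} \<longrightarrow> (\<forall>j<n2. even (card (w \<inter> colH2 H2 r2 j))) \<longrightarrow> (\<forall>a<r1. even (card {b\<in>w. Inr (a,b) \<in> e}))"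
  shows "e \<in> im_HXT H1 H2 r1 n1 r2 n2"
proof -
  let ?Xr = "hgp_X_row H1 H2 n1 r2" and ?XR = "hgp_X_rows r1 n2" and ?Q = "hgp_qubits r1 n1 r2 n2"
  let ?row = "rowH1 H1 n1" and ?col = "colH2 H2 r2"
  have eQ: "e \<subseteq> ?Q" using e by (simp add: ker_HZ_def f2_kernel_def)
  have step1: "\<forall>j\<in>{..<n2}. \<exists>T. T \<subseteq> {..<r1} \<and> {i. i < n1 \<and> Inl (i,j) \<in> e} = xsum ?row T"
  proof
    fix j assume j: "j \<in> {..<n2}"
    have "\<exists>T\<subseteq>{..<r1}. {i. i < n1 \<and> Inl (i,j) \<in> e} = xsum ?row T"
    proof (rule duality[where U = "{..<n1}"])
      show "\<forall>a\<in>{..<r1}. ?row a \<subseteq> {..<n1}" by (auto simp: rowH1_def)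
      show "\<forall>z. z \<subseteq> {..<n1} \<longrightarrow> (\<forall>a\<in>{..<r1}. even (card (z \<inter> ?row a))) \<longrightarrow>
            even (card (z \<inter> {i. i < n1 \<and> Inl (i,j) \<in> e}))"
      proof (intro allI impI)
        fix z assume z: "z \<subseteq> {..<n1}" "\<forall>a\<in>{..<r1}. even (card (z \<inter> ?row a))"
        have "z \<inter> {i. i < n1 \<and> Inl (i,j) \<in> e} = {i\<in>z. Inl (i,j) \<in> e}" using z(1) by auto
        then show "even (card (z \<inter> {i. i < n1 \<and> Inl (i,j) \<in> e}))"
          using hu z j by auto
      qed
    qed auto
    then show "\<exists>T. T \<subseteq> {..<r1} \<and> {i. i < n1 \<and> Inl (i,j) \<in> e} = xsum ?row T" by blast
  qed
  then obtain A where A: "\<forall>j\<in>{..<n2}. A j \<subseteq> {..<r1} \<and> {i. i < n1 \<and> Inl (i,j) \<in> e} = xsum ?row (A j)"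
    using bchoice[OF step1] by blast
  define M where "M = {(a,j). j < n2 \<and> a \<in> A j}"
  have MXR: "M \<subseteq> ?XR" using A by (auto simp: M_def hgp_X_rows_def)
  have finM: "finite M" by (rule finite_subset[OF MXR]) (simp add: hgp_X_rows_def)
  define s1 where "s1 = xsum ?Xr M"
  have s1im: "s1 \<in> im_HXT H1 H2 r1 n1 r2 n2"
    unfolding s1_def im_HXT_def using MXR finM by (intro xsum_in_span) auto
  have s1Q: "s1 \<subseteq> ?Q" unfolding s1_def by (intro xsum_subset) (use MXR Xrow_sub_Q in fastforce)
  have s1_Inl: "Inl (i,j) \<in> s1 \<longleftrightarrow> Inl (i,j) \<in> e" for i j
  proof -
    have "{p\<in>M. Inl (i,j) \<in> ?Xr p} = (\<lambda>a. (a,j)) ` {a. (a,j) \<in> M \<and> i \<in> ?row a}"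
      by (auto simp: rowH1_def)
    then have "card {p\<in>M. Inl (i,j) \<in> ?Xr p} = card {a. (a,j) \<in> M \<and> i \<in> ?row a}"
      by (simp add: card_image inj_on_def)
    then have 1: "Inl (i,j) \<in> s1 \<longleftrightarrow> odd (card {a. (a,j) \<in> M \<and> i \<in> ?row a})"
      by (simp add: s1_def xsum_iff)
    show ?thesis
    proof (cases "j < n2")
      case True
      have "{a. (a,j) \<in> M \<and> i \<in> ?row a} = {t\<in>A j. i \<in> ?row t}" using True by (auto simp: M_def)
      then have "Inl (i,j) \<in> s1 \<longleftrightarrow> i \<in> xsum ?row (A j)" using 1 by (simp add: xsum_iff)
      also have "\<dots> \<longleftrightarrow> i \<in> {i. i < n1 \<and> Inl (i,j) \<in> e}" using A True by auto
      also have "\<dots> \<longleftrightarrow> Inl (i,j) \<in> e" using eQ by auto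
      finally show ?thesis .
    next
      case False
      then have h: "{a. (a,j) \<in> M \<and> i \<in> ?row a} = {}" by (auto simp: M_def)
      have "Inl (i,j) \<notin> s1" using 1 unfolding h by simp
      moreover have "Inl (i,j) \<notin> e" using eQ False by auto
      ultimately show ?thesis by simp
    qed
  qed
  define A' where "A' a = {j. j < n2 \<and> a \<in> A j}" for a
  have finA': "finite (A' a)" for a by (simp add: A'_def)
  have s1_Inr: "Inr (a,b) \<in> s1 \<longleftrightarrow> b \<in> xsum ?col (A' a)" for a b
  proof -
    have "{p\<in>M. Inr (a,b) \<in> ?Xr p} = (\<lambda>j. (a,j)) ` {t\<in>A' a. b \<in> ?col t}"
      by (auto simp: M_def A'_def colH2_def)
    then have "card {p\<in>M. Inr (a,b) \<in> ?Xr p} = card {t\<in>A' a. b \<in> ?col t}"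
      by (simp add: card_image inj_on_def)
    then show ?thesis by (simp add: s1_def xsum_iff)
  qed
  define e1 where "e1 = symd e s1"
  have e1Q: "e1 \<subseteq> ?Q" using eQ s1Q by (auto simp: e1_def symd_def)
  have e1_Inl: "Inl (i,j) \<notin> e1" for i j using s1_Inl by (simp add: e1_def)
  have e1ker: "e1 \<in> ker_HZ H1 H2 r1 n1 r2 n2"
    unfolding e1_def by (rule kerZ_symd[OF e im_sub_kerZ[OF s1im]])
  define \<rho> where "\<rho> a = {b. Inr (a,b) \<in> e1}" for a
  have \<rho>sub: "\<rho> a \<subseteq> {..<r2}" for a using e1Q by (auto simp: \<rho>_def)
  obtain J where J: "J \<subseteq> {..<n2}" "\<forall>k\<in>{..<n2}. \<exists>T\<subseteq>J. ?col k = xsum ?col T"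
     "\<forall>T\<subseteq>J. xsum ?col T = {} \<longrightarrow> T = {}"
    using exists_basis[of "{..<n2}" ?col] by auto
  have finJ: "finite J" using finite_subset[OF J(1)] by simp
  have step2: "\<forall>a\<in>{..<r1}. \<exists>B. B \<subseteq> J \<and> \<rho> a = xsum ?col B"
  proof
    fix a assume a: "a \<in> {..<r1}"
    have "\<exists>B\<subseteq>J. \<rho> a = xsum ?col B"
    proof (rule duality[where U = "{..<r2}"])
      show "\<forall>j\<in>J. ?col j \<subseteq> {..<r2}" by (auto simp: colH2_def)
      show "\<forall>z. z \<subseteq> {..<r2} \<longrightarrow> (\<forall>j\<in>J. even (card (z \<inter> ?col j))) \<longrightarrow> even (card (z \<inter> \<rho> a))"
      proof (intro allI impI)
        fix z assume z: "z \<subseteq> {..<r2}" "\<forall>j\<in>J. even (card (z \<inter> ?col j))"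
        have finz: "finite z" using finite_subset[OF z(1)] by simp
        have zall: "\<forall>j<n2. even (card (z \<inter> ?col j))"
        proof (intro allI impI)
          fix k assume "k < n2"
          then obtain T where T: "T \<subseteq> J" "?col k = xsum ?col T" using J(2) by blast
          have finT: "finite T" by (rule finite_subset[OF T(1) finJ])
          have h: "{t\<in>T. odd (card (?col t \<inter> z))} = {}" using T(1) z(2) by (auto simp: Int_commute)
          have "even (card (xsum ?col T \<inter> z))" using par_xsum[OF finT finz, of ?col, unfolded h] by simp
          then show "even (card (z \<inter> ?col k))" using T(2) by (simp add: Int_commute)
        qed
        have r: "\<rho> a = symd {b. Inr (a,b) \<in> e} (xsum ?col (A' a))"
          using s1_Inr by (auto simp: \<rho>_def e1_def)
        have p1: "even (card ({b. Inr (a,b) \<in> e} \<inter> z))"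
        proof -
          have "{b. Inr (a,b) \<in> e} \<inter> z = {b\<in>z. Inr (a,b) \<in> e}" by auto
          then show ?thesis using hw z(1) zall a by auto
        qed
        have p2: "even (card (xsum ?col (A' a) \<inter> z))"
        proof -
          have h: "{t\<in>A' a. odd (card (?col t \<inter> z))} = {}" using zall by (auto simp: A'_def Int_commute)
          show ?thesis using par_xsum[OF finA' finz, of ?col a, unfolded h] by simp
        qed
        show "even (card (z \<inter> \<rho> a))"
          using par_symd[OF finz, of "{b. Inr (a,b) \<in> e}" "xsum ?col (A' a)"] p1 p2 r
          by (simp add: Int_commute)
      qed
    qed (use finJ \<rho>sub in auto)
    then show "\<exists>B. B \<subseteq> J \<and> \<rho> a = xsum ?col B" by blast
  qed
  then obtain B where B: "\<forall>a\<in>{..<r1}. B a \<subseteq> J \<and> \<rho> a = xsum ?col (B a)"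
    using bchoice[OF step2] by blast
  define N where "N = {(a,j). a < r1 \<and> j \<in> B a}"
  have NXR: "N \<subseteq> ?XR" using B J(1) by (auto simp: N_def hgp_X_rows_def)
  have finN: "finite N" by (rule finite_subset[OF NXR]) (simp add: hgp_X_rows_def)
  define s2 where "s2 = xsum ?Xr N"
  have s2im: "s2 \<in> im_HXT H1 H2 r1 n1 r2 n2"
    unfolding s2_def im_HXT_def using NXR finN by (intro xsum_in_span) auto
  have s2_Inr: "Inr (a,b) \<in> s2 \<longleftrightarrow> Inr (a,b) \<in> e1" for a b
  proof -
    have "{p\<in>N. Inr (a,b) \<in> ?Xr p} = (\<lambda>j. (a,j)) ` {t. (a,t) \<in> N \<and> b \<in> ?col t}"
      by (auto simp: colH2_def)
    then have "card {p\<in>N. Inr (a,b) \<in> ?Xr p} = card {t. (a,t) \<in> N \<and> b \<in> ?col t}"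
      by (simp add: card_image inj_on_def)
    then have 1: "Inr (a,b) \<in> s2 \<longleftrightarrow> odd (card {t. (a,t) \<in> N \<and> b \<in> ?col t})"
      by (simp add: s2_def xsum_iff)
    show ?thesis
    proof (cases "a < r1")
      case True
      have "{t. (a,t) \<in> N \<and> b \<in> ?col t} = {t\<in>B a. b \<in> ?col t}" using True by (auto simp: N_def)
      then have "Inr (a,b) \<in> s2 \<longleftrightarrow> b \<in> xsum ?col (B a)" using 1 by (simp add: xsum_iff)
      also have "\<dots> \<longleftrightarrow> b \<in> \<rho> a" using B True by auto
      finally show ?thesis by (simp add: \<rho>_def)
    next
      case False
      then have h: "{t. (a,t) \<in> N \<and> b \<in> ?col t} = {}" by (auto simp: N_def)
      have "Inr (a,b) \<notin> s2" using 1 unfolding h by simp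
      moreover have "Inr (a,b) \<notin> e1" using e1Q False by auto
      ultimately show ?thesis by simp
    qed
  qed
  have s2_Inl: "Inl (i,j) \<notin> s2" for i j
  proof -
    have "{p\<in>N. Inl (i,j) \<in> ?Xr p} = (\<lambda>a. (a,j)) ` {a. (a,j) \<in> N \<and> i < n1 \<and> H1 a i}"
      by auto
    then have "card {p\<in>N. Inl (i,j) \<in> ?Xr p} = card {a. (a,j) \<in> N \<and> i < n1 \<and> H1 a i}"
      by (simp add: card_image inj_on_def)
    then have 1: "Inl (i,j) \<in> s2 \<longleftrightarrow> odd (card {a. (a,j) \<in> N \<and> i < n1 \<and> H1 a i})"
      by (simp add: s2_def xsum_iff)
    show ?thesis
    proof (cases "i < n1")
      case False
      then have h: "{a. (a,j) \<in> N \<and> i < n1 \<and> H1 a i} = {}" by auto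
      show ?thesis using 1 unfolding h by simp
    next
      case True
      define G where "G = {a. a < r1 \<and> H1 a i}"
      have finG: "finite G" by (simp add: G_def)
      define T where "T = xsum B G"
      have TJ: "T \<subseteq> J" unfolding T_def using B by (intro xsum_subset) (auto simp: G_def)
      have "xsum ?col T = xsum (\<lambda>a. xsum ?col (B a)) G"
        unfolding T_def by (rule xsum_comp[OF finG finJ]) (use B in \<open>auto simp: G_def\<close>)
      also have "\<dots> = xsum \<rho> G"
      proof -
        have "\<And>a. a \<in> G \<Longrightarrow> xsum ?col (B a) = \<rho> a" using B by (auto simp: G_def)
        then have "\<And>x. {t\<in>G. x \<in> xsum ?col (B t)} = {t\<in>G. x \<in> \<rho> t}" by auto
        then show ?thesis by (simp add: xsum_def)
      qed
      also have "\<dots> = {}"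
      proof -
        have "\<And>b. b \<notin> xsum \<rho> G"
        proof -
          fix b
          show "b \<notin> xsum \<rho> G"
          proof (cases "b < r2")
            case False
            then have h: "{t\<in>G. b \<in> \<rho> t} = {}" using \<rho>sub by auto
            show ?thesis unfolding xsum_iff h by simp
          next
            case b: True
            have h: "{j. j < n2 \<and> H2 b j \<and> Inl (i,j) \<in> e1} = {}" using e1_Inl by auto
            have "even (card {a. a < r1 \<and> H1 a i \<and> Inr (a,b) \<in> e1})"
              using kerZ_par[OF e1ker True b] unfolding h by simp
            moreover have "{a. a < r1 \<and> H1 a i \<and> Inr (a,b) \<in> e1} = {t\<in>G. b \<in> \<rho> t}"
              by (auto simp: G_def \<rho>_def)
            ultimately show ?thesis by (simp add: xsum_iff)
          qed
        qed
        then show ?thesis by auto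
      qed
      finally have "T = {}" using J(3) TJ by blast
      then have "j \<notin> T" by simp
      moreover have "{a. (a,j) \<in> N \<and> i < n1 \<and> H1 a i} = {t\<in>G. j \<in> B t}"
        using True by (auto simp: N_def G_def)
      ultimately show ?thesis using 1 by (simp add: T_def xsum_iff)
    qed
  qed
  have "e1 = s2"
  proof (rule set_eqI)
    fix q :: qubit
    show "q \<in> e1 \<longleftrightarrow> q \<in> s2"
      by (cases q) (auto simp: s2_Inr s2_Inl e1_Inl)
  qed
  then have "e = symd s2 s1" by (auto simp: e1_def)
  then show ?thesis using span_symd[OF s2im[unfolded im_HXT_def] s1im[unfolded im_HXT_def]]
    by (simp add: im_HXT_def)
qed

lemma odd_card_ne: "odd (card S) \<Longrightarrow> \<exists>x. x \<in> S"
  by (metis card.empty ex_in_conv odd_card_imp_not_empty)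

lemma card_le1: "finite S \<Longrightarrow> (\<forall>x\<in>S. \<forall>y\<in>S. x = y) \<Longrightarrow> card S \<le> 1"
  using card_le_Suc0_iff_eq by auto

lemma dist_le:
  assumes "L \<in> hgp_logicals H1 H2 r1 n1 r2 n2"
  shows "hgp_distance H1 H2 r1 n1 r2 n2 \<le> enat (card L)"
  unfolding hgp_distance_def using assms by (rule INF_lower)

lemma caseA:
  assumes e: "e \<in> ker_HZ H1 H2 r1 n1 r2 n2" and ne: "e \<notin> im_HXT H1 H2 r1 n1 r2 n2"
    and Ps: "\<forall>P\<in>set Ps. (\<exists>q. P \<subseteq> {q}) \<or> (\<exists>r\<in>hgp_X_rows r1 n2. P \<subseteq> hgp_X_row H1 H2 n1 r2 r)"
    and eq: "e = foldr symd Ps {}"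
  shows "hgp_distance H1 H2 r1 n1 r2 n2 \<le> enat (length Ps)"
proof (cases "\<exists>u j0. u \<subseteq> {..<n1} \<and> (\<forall>a<r1. even (card (u \<inter> rowH1 H1 n1 a))) \<and> j0 < n2 \<and> odd (card {i\<in>u. Inl (i,j0) \<in> e})")
  case True
  then obtain u j0 where u: "u \<subseteq> {..<n1}" "\<forall>a<r1. even (card (u \<inter> rowH1 H1 n1 a))" "j0 < n2" "odd (card {i\<in>u. Inl (i,j0) \<in> e})"
    by blast
  have finu: "finite u" using finite_subset[OF u(1)] by simp
  define \<pi> where "\<pi> A = {j. j < n2 \<and> odd (card {i\<in>u. Inl (i,j) \<in> A})}" for A :: "qubit set"
  obtain L where L: "L \<in> hgp_logicals H1 H2 r1 n1 r2 n2" "card L = card (\<pi> e)"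
    using projA[OF e u] by (auto simp: \<pi>_def)
  have "card (\<pi> (foldr symd Ps {})) \<le> length Ps"
  proof (rule count_gen)
    show "\<pi> (symd A B) = symd (\<pi> A) (\<pi> B)" for A B
    proof (rule set_eqI)
      fix j
      have "{i\<in>u. Inl (i,j) \<in> symd A B} = symd {i\<in>u. Inl (i,j) \<in> A} {i\<in>u. Inl (i,j) \<in> B}" by auto
      then have c: "odd (card {i\<in>u. Inl (i,j) \<in> symd A B}) = (odd (card {i\<in>u. Inl (i,j) \<in> A}) \<noteq> odd (card {i\<in>u. Inl (i,j) \<in> B}))"
        using card_symd_odd[of "{i\<in>u. Inl (i,j) \<in> A}" "{i\<in>u. Inl (i,j) \<in> B}"] finu by simp
      show "j \<in> \<pi> (symd A B) \<longleftrightarrow> j \<in> symd (\<pi> A) (\<pi> B)"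
        by (simp only: \<pi>_def mem_Collect_eq c) auto
    qed
    show "\<pi> {} = {}" by (simp add: \<pi>_def)
    show "finite (\<pi> A)" for A by (simp add: \<pi>_def)
    show "\<forall>P\<in>set Ps. card (\<pi> P) \<le> 1"
    proof
      fix P assume P: "P \<in> set Ps"
      have sub: "\<And>x. x \<in> \<pi> P \<Longrightarrow> \<exists>i. Inl (i,x) \<in> P"
        using odd_card_ne by (fastforce simp: \<pi>_def)
      show "card (\<pi> P) \<le> 1"
      proof (rule card_le1)
        show "finite (\<pi> P)" by (simp add: \<pi>_def)
        show "\<forall>x\<in>\<pi> P. \<forall>y\<in>\<pi> P. x = y"
        proof (intro ballI)
          fix x y assume x: "x \<in> \<pi> P" and y: "y \<in> \<pi> P"
          obtain i i' where ii: "Inl (i,x) \<in> P" "Inl (i',y) \<in> P" using sub[OF x] sub[OF y] by blast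
          from Ps P show "x = y"
          proof (elim ballE disjE exE bexE)
            fix q assume "P \<subseteq> {q}" then show "x = y" using ii by auto
          next
            fix r assume Pr: "P \<subseteq> hgp_X_row H1 H2 n1 r2 r"
            obtain a j where r: "r = (a,j)" by force
            have "Inl (i,x) \<in> hgp_X_row H1 H2 n1 r2 (a,j)" "Inl (i',y) \<in> hgp_X_row H1 H2 n1 r2 (a,j)"
              using ii Pr r by auto
            then show "x = y" by simp
          qed (use P in auto)
        qed
      qed
    qed
  qed
  then have "card L \<le> length Ps" using L(2) eq by simp
  then show ?thesis using dist_le[OF L(1)] by (meson enat_ord_simps(1) order_trans)
next
  case noU: False
  show ?thesis
  proof (cases "\<exists>w a0. w \<subseteq> {..<r2} \<and> (\<forall>j<n2. even (card (w \<inter> colH2 H2 r2 j))) \<and> a0 < r1 \<and> odd (card {b\<in>w. Inr (a0,b) \<in> e})")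
    case True
    then obtain w a0 where w: "w \<subseteq> {..<r2}" "\<forall>j<n2. even (card (w \<inter> colH2 H2 r2 j))" "a0 < r1" "odd (card {b\<in>w. Inr (a0,b) \<in> e})"
      by blast
    have finw: "finite w" using finite_subset[OF w(1)] by simp
    define \<pi> where "\<pi> A = {a. a < r1 \<and> odd (card {b\<in>w. Inr (a,b) \<in> A})}" for A :: "qubit set"
    obtain L where L: "L \<in> hgp_logicals H1 H2 r1 n1 r2 n2" "card L = card (\<pi> e)"
      using projB[OF e w] by (auto simp: \<pi>_def)
    have "card (\<pi> (foldr symd Ps {})) \<le> length Ps"
    proof (rule count_gen)
      show "\<pi> (symd A B) = symd (\<pi> A) (\<pi> B)" for A B
      proof (rule set_eqI)
        fix a
        have "{b\<in>w. Inr (a,b) \<in> symd A B} = symd {b\<in>w. Inr (a,b) \<in> A} {b\<in>w. Inr (a,b) \<in> B}" by auto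
        then have c: "odd (card {b\<in>w. Inr (a,b) \<in> symd A B}) = (odd (card {b\<in>w. Inr (a,b) \<in> A}) \<noteq> odd (card {b\<in>w. Inr (a,b) \<in> B}))"
          using card_symd_odd[of "{b\<in>w. Inr (a,b) \<in> A}" "{b\<in>w. Inr (a,b) \<in> B}"] finw by simp
        show "a \<in> \<pi> (symd A B) \<longleftrightarrow> a \<in> symd (\<pi> A) (\<pi> B)"
          by (simp only: \<pi>_def mem_Collect_eq c) auto
      qed
      show "\<pi> {} = {}" by (simp add: \<pi>_def)
      show "finite (\<pi> A)" for A by (simp add: \<pi>_def)
      show "\<forall>P\<in>set Ps. card (\<pi> P) \<le> 1"
      proof
        fix P assume P: "P \<in> set Ps"
        have sub: "\<And>x. x \<in> \<pi> P \<Longrightarrow> \<exists>b. Inr (x,b) \<in> P"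
          using odd_card_ne by (fastforce simp: \<pi>_def)
        show "card (\<pi> P) \<le> 1"
        proof (rule card_le1)
          show "finite (\<pi> P)" by (simp add: \<pi>_def)
          show "\<forall>x\<in>\<pi> P. \<forall>y\<in>\<pi> P. x = y"
          proof (intro ballI)
            fix x y assume x: "x \<in> \<pi> P" and y: "y \<in> \<pi> P"
            obtain b b' where bb: "Inr (x,b) \<in> P" "Inr (y,b') \<in> P" using sub[OF x] sub[OF y] by blast
            from Ps P show "x = y"
            proof (elim ballE disjE exE bexE)
              fix q assume "P \<subseteq> {q}" then show "x = y" using bb by auto
            next
              fix r assume Pr: "P \<subseteq> hgp_X_row H1 H2 n1 r2 r"
              obtain a j where r: "r = (a,j)" by force
              have "Inr (x,b) \<in> hgp_X_row H1 H2 n1 r2 (a,j)" "Inr (y,b') \<in> hgp_X_row H1 H2 n1 r2 (a,j)"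
                using bb Pr r by auto
              then show "x = y" by simp
            qed (use P in auto)
          qed
        qed
      qed
    qed
    then have "card L \<le> length Ps" using L(2) eq by simp
    then show ?thesis using dist_le[OF L(1)] by (meson enat_ord_simps(1) order_trans)
  next
    case noW: False
    have "e \<in> im_HXT H1 H2 r1 n1 r2 n2"
    proof (rule kunneth[OF e])
      show "\<forall>u. u \<subseteq> {..<n1} \<longrightarrow> (\<forall>a<r1. even (card (u \<inter> rowH1 H1 n1 a))) \<longrightarrow> (\<forall>j<n2. even (card {i\<in>u. Inl (i,j) \<in> e}))"
        using noU by blast
      show "\<forall>w. w \<subseteq> {..<r2} \<longrightarrow> (\<forall>j<n2. even (card (w \<inter> colH2 H2 r2 j))) \<longrightarrow> (\<forall>a<r1. even (card {b\<in>w. Inr (a,b) \<in> e}))"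
        using noW by blast
    qed
    then show ?thesis using ne by simp
  qed
qed

definition sw :: "qubit \<Rightarrow> qubit" where
  "sw q = (case q of Inl p \<Rightarrow> Inr p | Inr p \<Rightarrow> Inl p)"
definition tr :: "(nat \<Rightarrow> nat \<Rightarrow> bool) \<Rightarrow> nat \<Rightarrow> nat \<Rightarrow> bool" where
  "tr H x y = H y x"

lemma sw_Inl[simp]: "sw (Inl p) = Inr p" and sw_Inr[simp]: "sw (Inr p) = Inl p"
  by (simp_all add: sw_def)
lemma sw_sw[simp]: "sw (sw q) = q"
  by (cases q) simp_all
lemma inj_sw: "inj sw"
  by (metis injI sw_sw)
lemma tr_tr[simp]: "tr (tr H) = H"
  by (simp add: tr_def fun_eq_iff)
lemma tr_app[simp]: "tr H x y = H y x"
  by (simp add: tr_def)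
lemma mem_sw_img: "x \<in> sw ` A \<longleftrightarrow> sw x \<in> A"
  by (metis image_iff sw_sw)
lemma sw_sw_img[simp]: "sw ` sw ` A = A"
  by (auto simp: mem_sw_img)
lemma sw_Int: "sw ` (A \<inter> B) = sw ` A \<inter> sw ` B"
  by (rule set_eqI) (simp add: mem_sw_img)
lemma sw_symd: "sw ` symd A B = symd (sw ` A) (sw ` B)"
  by (rule set_eqI) (simp add: mem_sw_img)
lemma card_sw[simp]: "card (sw ` A) = card A"
  using inj_sw by (simp add: card_image inj_on_def inj_def)

lemma T1: "hgp_qubits n1 r1 n2 r2 = sw ` hgp_qubits r1 n1 r2 n2"
proof (rule set_eqI)
  fix x :: qubit show "x \<in> hgp_qubits n1 r1 n2 r2 \<longleftrightarrow> x \<in> sw ` hgp_qubits r1 n1 r2 n2"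
    unfolding mem_sw_img by (cases x) auto
qed
lemma T2: "hgp_X_row (tr H1) (tr H2) r1 n2 r = sw ` hgp_Z_row H1 H2 r1 n2 r"
proof (rule set_eqI)
  obtain a b where r: "r = (a,b)" by force
  fix x :: qubit show "x \<in> hgp_X_row (tr H1) (tr H2) r1 n2 r \<longleftrightarrow> x \<in> sw ` hgp_Z_row H1 H2 r1 n2 r"
    unfolding mem_sw_img r by (cases x) auto
qed
lemma T3: "hgp_Z_row (tr H1) (tr H2) n1 r2 r = sw ` hgp_X_row H1 H2 n1 r2 r"
proof (rule set_eqI)
  obtain a b where r: "r = (a,b)" by force
  fix x :: qubit show "x \<in> hgp_Z_row (tr H1) (tr H2) n1 r2 r \<longleftrightarrow> x \<in> sw ` hgp_X_row H1 H2 n1 r2 r"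
    unfolding mem_sw_img r by (cases x) auto
qed
lemma T4: "hgp_X_rows n1 r2 = hgp_Z_rows n1 r2" "hgp_Z_rows r1 n2 = hgp_X_rows r1 n2"
  by (simp_all add: hgp_X_rows_def hgp_Z_rows_def)

lemma ker_sw:
  assumes "v \<in> f2_kernel Q I row"
  shows "sw ` v \<in> f2_kernel (sw ` Q) I (\<lambda>r. sw ` row r)"
  using assms unfolding f2_kernel_def by (auto simp: sw_Int[symmetric])

lemma span_sw:
  assumes "x \<in> f2_span ((\<lambda>r. sw ` g r) ` I)"
  shows "sw ` x \<in> f2_span (g ` I)"
  using assms
proof (induction x rule: f2_span.induct)
  case span_zero then show ?case by (simp add: f2_span.span_zero)
next
  case (span_add s v)
  then obtain r where r: "r \<in> I" "s = sw ` g r" by auto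
  have "sw ` symd s v = symd (g r) (sw ` v)" using r by (simp add: sw_symd)
  then show ?case using span_add r by (simp add: f2_span.span_add)
qed

lemma T2f: "hgp_X_row (tr H1) (tr H2) r1 n2 = (\<lambda>r. sw ` hgp_Z_row H1 H2 r1 n2 r)"
  by (rule ext) (rule T2)
lemma T3f: "hgp_Z_row (tr H1) (tr H2) n1 r2 = (\<lambda>r. sw ` hgp_X_row H1 H2 n1 r2 r)"
  by (rule ext) (rule T3)

lemma F1: "v \<in> ker_HX H1 H2 r1 n1 r2 n2 \<Longrightarrow> sw ` v \<in> ker_HZ (tr H1) (tr H2) n1 r1 n2 r2"
  unfolding ker_HX_def ker_HZ_def T1[of n1 r1 n2 r2] T3f T4(2)[of r1 n2] by (rule ker_sw)
lemma F2: "v \<in> ker_HZ H1 H2 r1 n1 r2 n2 \<Longrightarrow> sw ` v \<in> ker_HX (tr H1) (tr H2) n1 r1 n2 r2"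
  unfolding ker_HX_def ker_HZ_def T1[of n1 r1 n2 r2] T2f T4(1)[of n1 r2] by (rule ker_sw)
lemma F3: "sw ` v \<in> im_HXT (tr H1) (tr H2) n1 r1 n2 r2 \<Longrightarrow> v \<in> im_HZT H1 H2 r1 n1 r2 n2"
  unfolding im_HXT_def im_HZT_def T2f T4(1)[of n1 r2] using span_sw[of "sw ` v" "hgp_Z_row H1 H2 r1 n2" "hgp_Z_rows n1 r2"] by simp
lemma F4: "sw ` v \<in> im_HZT (tr H1) (tr H2) n1 r1 n2 r2 \<Longrightarrow> v \<in> im_HXT H1 H2 r1 n1 r2 n2"
  unfolding im_HXT_def im_HZT_def T3f T4(2)[of r1 n2] using span_sw[of "sw ` v" "hgp_X_row H1 H2 n1 r2" "hgp_X_rows r1 n2"] by simp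

lemma logical_sw:
  assumes "v \<in> hgp_logicals (tr H1) (tr H2) n1 r1 n2 r2"
  shows "sw ` v \<in> hgp_logicals H1 H2 r1 n1 r2 n2"
proof -
  have k1: "sw ` v \<in> ker_HZ H1 H2 r1 n1 r2 n2" if "v \<in> ker_HX (tr H1) (tr H2) n1 r1 n2 r2"
    using F1[OF that] by simp
  have i1: "v \<in> im_HZT (tr H1) (tr H2) n1 r1 n2 r2" if "sw ` v \<in> im_HXT H1 H2 r1 n1 r2 n2"
    using F3[of v "tr H1" "tr H2" r1 n1 r2 n2] that by simp
  have k2: "sw ` v \<in> ker_HX H1 H2 r1 n1 r2 n2" if "v \<in> ker_HZ (tr H1) (tr H2) n1 r1 n2 r2"
    using F2[OF that] by simp
  have i2: "v \<in> im_HXT (tr H1) (tr H2) n1 r1 n2 r2" if "sw ` v \<in> im_HZT H1 H2 r1 n1 r2 n2"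
    using F4[of v "tr H1" "tr H2" r1 n1 r2 n2] that by simp
  show ?thesis
  proof (cases "v \<in> ker_HX (tr H1) (tr H2) n1 r1 n2 r2 - im_HZT (tr H1) (tr H2) n1 r1 n2 r2")
    case True
    then have "sw ` v \<in> ker_HZ H1 H2 r1 n1 r2 n2 - im_HXT H1 H2 r1 n1 r2 n2" using k1 i1 by blast
    then show ?thesis unfolding hgp_logicals_def by (rule UnI2)
  next
    case False
    then have "v \<in> ker_HZ (tr H1) (tr H2) n1 r1 n2 r2 - im_HXT (tr H1) (tr H2) n1 r1 n2 r2"
      using assms unfolding hgp_logicals_def by blast
    then have "sw ` v \<in> ker_HX H1 H2 r1 n1 r2 n2 - im_HZT H1 H2 r1 n1 r2 n2" using k2 i2 by blast
    then show ?thesis unfolding hgp_logicals_def by (rule UnI1)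
  qed
qed

lemma dist_sw: "hgp_distance H1 H2 r1 n1 r2 n2 \<le> hgp_distance (tr H1) (tr H2) n1 r1 n2 r2"
  unfolding hgp_distance_def
proof (rule INF_mono)
  fix m assume "m \<in> hgp_logicals (tr H1) (tr H2) n1 r1 n2 r2"
  then have "sw ` m \<in> hgp_logicals H1 H2 r1 n1 r2 n2" by (rule logical_sw)
  moreover have "enat (card (sw ` m)) \<le> enat (card m)" by simp
  ultimately show "\<exists>n\<in>hgp_logicals H1 H2 r1 n1 r2 n2. enat (card n) \<le> enat (card m)"
    by blast
qed

lemma foldr_sw: "foldr symd (map (image sw) Ps) {} = sw ` foldr symd Ps {}"
  by (induction Ps) (simp_all add: sw_symd)

lemma caseB:
  assumes f: "f \<in> ker_HX H1 H2 r1 n1 r2 n2" and nf: "f \<notin> im_HZT H1 H2 r1 n1 r2 n2"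
    and Ps: "\<forall>P\<in>set Ps. (\<exists>q. P \<subseteq> {q}) \<or> (\<exists>r\<in>hgp_Z_rows n1 r2. P \<subseteq> hgp_Z_row H1 H2 r1 n2 r)"
    and eq: "f = foldr symd Ps {}"
  shows "hgp_distance H1 H2 r1 n1 r2 n2 \<le> enat (length Ps)"
proof -
  have "hgp_distance (tr H1) (tr H2) n1 r1 n2 r2 \<le> enat (length (map (image sw) Ps))"
  proof (rule caseA)
    show "sw ` f \<in> ker_HZ (tr H1) (tr H2) n1 r1 n2 r2" by (rule F1[OF f])
    show "sw ` f \<notin> im_HXT (tr H1) (tr H2) n1 r1 n2 r2" using F3 nf by blast
    show "sw ` f = foldr symd (map (image sw) Ps) {}" by (simp add: foldr_sw eq)
    show "\<forall>P\<in>set (map (image sw) Ps). (\<exists>q. P \<subseteq> {q}) \<or> (\<exists>r\<in>hgp_X_rows n1 r2. P \<subseteq> hgp_X_row (tr H1) (tr H2) r1 n2 r)"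
    proof
      fix P' assume "P' \<in> set (map (image sw) Ps)"
      then obtain P where P: "P \<in> set Ps" "P' = sw ` P" by auto
      from Ps P(1) show "(\<exists>q. P' \<subseteq> {q}) \<or> (\<exists>r\<in>hgp_X_rows n1 r2. P' \<subseteq> hgp_X_row (tr H1) (tr H2) r1 n2 r)"
      proof (elim ballE disjE exE bexE)
        fix q assume "P \<subseteq> {q}"
        then have "P' \<subseteq> {sw q}" using P(2) by auto
        then show ?thesis by blast
      next
        fix r assume "r \<in> hgp_Z_rows n1 r2" "P \<subseteq> hgp_Z_row H1 H2 r1 n2 r"
        then have "r \<in> hgp_X_rows n1 r2" "P' \<subseteq> hgp_X_row (tr H1) (tr H2) r1 n2 r"
          using P(2) by (auto simp: T2 T4(1)[of n1 r2])
        then show ?thesis by blast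
      qed (use P in auto)
    qed
  qed
  then show ?thesis using dist_sw[of H1 H2 r1 n1 r2 n2] by simp
qed

lemma fe_fst: "fst (fault_error fs) = foldr symd (map fst fs) {}"
  by (induction fs) (simp_all add: fault_error_def pauli_mult_def)
lemma fe_snd: "snd (fault_error fs) = foldr symd (map snd fs) {}"
  by (induction fs) (simp_all add: fault_error_def pauli_mult_def)

lemma foldr_single: "distinct xs \<Longrightarrow> foldr symd (map (\<lambda>q. {q}) xs) {} = set xs"
proof (induction xs)
  case Nil then show ?case by simp
next
  case (Cons x xs)
  then show ?case by (auto simp: symd_def)
qed

lemma foldr_empty: "foldr symd (map (\<lambda>q. {}) xs) {} = {}"
  by (induction xs) simp_all

lemma empty_kerX: "{} \<in> ker_HX H1 H2 r1 n1 r2 n2"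
  by (simp add: ker_HX_def f2_kernel_def)
lemma empty_kerZ: "{} \<in> ker_HZ H1 H2 r1 n1 r2 n2"
  by (simp add: ker_HZ_def f2_kernel_def)

lemma eff_le:
  assumes v: "v \<in> hgp_logicals H1 H2 r1 n1 r2 n2"
  shows "effective_distance H1 H2 r1 n1 r2 n2 ordX ordZ \<le> enat (card v)"
proof -
  have vQ: "v \<subseteq> hgp_qubits r1 n1 r2 n2"
    using v by (auto simp: hgp_logicals_def ker_HX_def ker_HZ_def f2_kernel_def)
  then have "finite v" using finite_subset[OF vQ] by simp
  then obtain xs where xs: "set xs = v" "distinct xs" using finite_distinct_list by blast
  have len: "length xs = card v" using xs distinct_card by fastforce
  show ?thesis
  proof (cases "v \<in> ker_HZ H1 H2 r1 n1 r2 n2 - im_HXT H1 H2 r1 n1 r2 n2")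
    case True
    define fs where "fs = map (\<lambda>q. ({q}, {}::qubit set)) xs"
    have sf: "set fs \<subseteq> single_faults H1 H2 r1 n1 r2 n2 ordX ordZ"
      using vQ xs(1) by (auto simp: fs_def single_faults_def)
    have "fst (fault_error fs) = v" unfolding fe_fst fs_def using foldr_single[OF xs(2)] xs(1)
      by (simp add: comp_def)
    moreover have "snd (fault_error fs) = {}" unfolding fe_snd fs_def using foldr_empty[of xs]
      by (simp add: comp_def)
    ultimately have "undetectable_logical H1 H2 r1 n1 r2 n2 (fault_error fs)"
      using True empty_kerX by (simp add: undetectable_logical_def)
    then have "effective_distance H1 H2 r1 n1 r2 n2 ordX ordZ \<le> enat (length fs)"
      unfolding effective_distance_def using sf by (intro INF_lower) simp
    then show ?thesis using len by (simp add: fs_def)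
  next
    case False
    then have v2: "v \<in> ker_HX H1 H2 r1 n1 r2 n2 - im_HZT H1 H2 r1 n1 r2 n2"
      using v unfolding hgp_logicals_def by blast
    define fs where "fs = map (\<lambda>q. ({}::qubit set, {q})) xs"
    have sf: "set fs \<subseteq> single_faults H1 H2 r1 n1 r2 n2 ordX ordZ"
      using vQ xs(1) by (auto simp: fs_def single_faults_def)
    have "snd (fault_error fs) = v" unfolding fe_snd fs_def using foldr_single[OF xs(2)] xs(1)
      by (simp add: comp_def)
    moreover have "fst (fault_error fs) = {}" unfolding fe_fst fs_def using foldr_empty[of xs]
      by (simp add: comp_def)
    ultimately have "undetectable_logical H1 H2 r1 n1 r2 n2 (fault_error fs)"
      using v2 empty_kerZ by (simp add: undetectable_logical_def)
    then have "effective_distance H1 H2 r1 n1 r2 n2 ordX ordZ \<le> enat (length fs)"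
      unfolding effective_distance_def using sf by (intro INF_lower) simp
    then show ?thesis using len by (simp add: fs_def)
  qed
qed

lemma sf_pieces:
  assumes vo: "valid_orders H1 H2 r1 n1 r2 n2 ordX ordZ"
    and p: "p \<in> single_faults H1 H2 r1 n1 r2 n2 ordX ordZ"
  shows "(\<exists>q. fst p \<subseteq> {q}) \<or> (\<exists>r\<in>hgp_X_rows r1 n2. fst p \<subseteq> hgp_X_row H1 H2 n1 r2 r)"
    and "(\<exists>q. snd p \<subseteq> {q}) \<or> (\<exists>r\<in>hgp_Z_rows n1 r2. snd p \<subseteq> hgp_Z_row H1 H2 r1 n2 r)"
proof -
  have X: "set (drop k (ordX r)) \<subseteq> hgp_X_row H1 H2 n1 r2 r" if "r \<in> hgp_X_rows r1 n2" for k r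
    using vo that set_drop_subset[of k "ordX r"] by (auto simp: valid_orders_def)
  have Z: "set (drop k (ordZ r)) \<subseteq> hgp_Z_row H1 H2 r1 n2 r" if "r \<in> hgp_Z_rows n1 r2" for k r
    using vo that set_drop_subset[of k "ordZ r"] by (auto simp: valid_orders_def)
  from p[unfolded single_faults_def]
  show "(\<exists>q. fst p \<subseteq> {q}) \<or> (\<exists>r\<in>hgp_X_rows r1 n2. fst p \<subseteq> hgp_X_row H1 H2 n1 r2 r)"
  proof (elim UnE)
    assume "p \<in> {(set (drop k (ordX r)), {}) | r k. r \<in> hgp_X_rows r1 n2}"
    then obtain r k where rk: "r \<in> hgp_X_rows r1 n2" "p = (set (drop k (ordX r)), {})" by blast
    have "fst p \<subseteq> hgp_X_row H1 H2 n1 r2 r" using X[where r=r and k=k] rk by simp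
    then show ?thesis using rk(1) by blast
  qed auto
  from p[unfolded single_faults_def]
  show "(\<exists>q. snd p \<subseteq> {q}) \<or> (\<exists>r\<in>hgp_Z_rows n1 r2. snd p \<subseteq> hgp_Z_row H1 H2 r1 n2 r)"
  proof (elim UnE)
    assume "p \<in> {({}, set (drop k (ordZ r))) | r k. r \<in> hgp_Z_rows n1 r2}"
    then obtain r k where rk: "r \<in> hgp_Z_rows n1 r2" "p = ({}, set (drop k (ordZ r)))" by blast
    have "snd p \<subseteq> hgp_Z_row H1 H2 r1 n2 r" using Z[where r=r and k=k] rk by simp
    then show ?thesis using rk(1) by blast
  qed auto
qed

theorem theorem2:
  fixes H1 H2 :: "nat \<Rightarrow> nat \<Rightarrow> bool" and r1 n1 r2 n2 :: nat
    and ordX ordZ :: "nat \<times> nat \<Rightarrow> qubit list"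
  assumes "valid_orders H1 H2 r1 n1 r2 n2 ordX ordZ"
  shows "effective_distance H1 H2 r1 n1 r2 n2 ordX ordZ = hgp_distance H1 H2 r1 n1 r2 n2"
proof (rule antisym)
  show "effective_distance H1 H2 r1 n1 r2 n2 ordX ordZ \<le> hgp_distance H1 H2 r1 n1 r2 n2"
    unfolding hgp_distance_def by (rule INF_greatest) (rule eff_le)
  show "hgp_distance H1 H2 r1 n1 r2 n2 \<le> effective_distance H1 H2 r1 n1 r2 n2 ordX ordZ"
    unfolding effective_distance_def
  proof (rule INF_greatest)
    fix fs assume fs: "fs \<in> {fs. set fs \<subseteq> single_faults H1 H2 r1 n1 r2 n2 ordX ordZ
                  \<and> undetectable_logical H1 H2 r1 n1 r2 n2 (fault_error fs)}"
    then have sf: "set fs \<subseteq> single_faults H1 H2 r1 n1 r2 n2 ordX ordZ"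
      and ud: "undetectable_logical H1 H2 r1 n1 r2 n2 (fault_error fs)" by auto
    show "hgp_distance H1 H2 r1 n1 r2 n2 \<le> enat (length fs)"
    proof (cases "fst (fault_error fs) \<notin> im_HXT H1 H2 r1 n1 r2 n2")
      case True
      have "hgp_distance H1 H2 r1 n1 r2 n2 \<le> enat (length (map fst fs))"
      proof (rule caseA)
        show "fst (fault_error fs) \<in> ker_HZ H1 H2 r1 n1 r2 n2" using ud by (simp add: undetectable_logical_def)
        show "fst (fault_error fs) \<notin> im_HXT H1 H2 r1 n1 r2 n2" by (rule True)
        show "fst (fault_error fs) = foldr symd (map fst fs) {}" by (rule fe_fst)
        show "\<forall>P\<in>set (map fst fs). (\<exists>q. P \<subseteq> {q}) \<or> (\<exists>r\<in>hgp_X_rows r1 n2. P \<subseteq> hgp_X_row H1 H2 n1 r2 r)"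
          using sf_pieces(1)[OF assms] sf by auto
      qed
      then show ?thesis by simp
    next
      case False
      then have nz: "snd (fault_error fs) \<notin> im_HZT H1 H2 r1 n1 r2 n2"
        using ud by (simp add: undetectable_logical_def)
      have "hgp_distance H1 H2 r1 n1 r2 n2 \<le> enat (length (map snd fs))"
      proof (rule caseB)
        show "snd (fault_error fs) \<in> ker_HX H1 H2 r1 n1 r2 n2" using ud by (simp add: undetectable_logical_def)
        show "snd (fault_error fs) \<notin> im_HZT H1 H2 r1 n1 r2 n2" by (rule nz)
        show "snd (fault_error fs) = foldr symd (map snd fs) {}" by (rule fe_snd)
        show "\<forall>P\<in>set (map snd fs). (\<exists>q. P \<subseteq> {q}) \<or> (\<exists>r\<in>hgp_Z_rows n1 r2. P \<subseteq> hgp_Z_row H1 H2 r1 n2 r)"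
          using sf_pieces(2)[OF assms] sf by auto
      qed
      then show ?thesis by simp
    qed
  qed
qed

end
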